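(* Let $\mathcal T$ be a mesh as in the context, $x,y\in\overline\Omega$ and $i\in\{1,\dots,d\}$ with $x_i=y_i$, $x\in\mathrm{Sk}_i$ and $y\notin\mathrm{Sk}_i$. Then there exists a T-junction $T$ with $\mathrm{odir}(T)=i$ and associated cell $Q=\mathrm{ascell}(T)$ such that, with $j=\mathrm{pdir}(T)$, $\overline T\cap\mathrm{conv}\{x,y\}\ne\emptyset$, $x_j\ne y_j$, and $Q_j\cap\mathrm{conv}\{x_j,y_j\}\ne\emptyset$.
   Context: Fix $d\ge2$, integers $N_1,\dots,N_d\ge1$, $\mathbf p\in\mathbb N^d$, $q_k=\lfloor(p_k+1)/2\rfloor$, $\Omega=\prod_{k=1}^d(0,N_k)$, $\mathrm{AR}=\prod_k[q_k,N_k-q_k]$. A mesh $\mathcal T$ is a finite family of pairwise disjoint sets $E=E_1\times\cdots\times E_d$ (entities) with union $\overline\Omega$, each $E_k$ a singleton $\{n\}$, $n\in\{0,\dots,N_k\}$, or an open interval $(a,b)$ with integers $0\le a<b\le N_k$; cells are entities all of whose components are open intervals; the dimension of an entity is its number of interval components. Only meshes arising as follows are considered: start from a tensor-product mesh given by integer grids $0=g^k_0<\dots<g^k_{M_k}=N_k$ (entities: products of grid points and open grid intervals), each containing $0,\dots,q_k$ and $N_k-q_k,\dots,N_k$, and apply finitely many subdivision steps $\mathrm{subdiv}(\mathcal T,Q,j)$: for a cell $Q\subset\mathrm{AR}$ and direction $j$ with $m=\frac12(\inf Q_j+\sup Q_j)$ an integer, let $D=\overline Q$; for each $\ell\ne j$,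 if $\min D_\ell=q_\ell$ replace $D_\ell$ by $D_\ell\cup[0,q_\ell]$, and if $\max D_\ell=N_\ell-q_\ell$ replace $D_\ell$ by $D_\ell\cup[N_\ell-q_\ell,N_\ell]$; replace each entity $E\subset D$ with $E_j=Q_j$ by the three entities with $j$-th component $(\inf Q_j,m)$, $\{m\}$, $(m,\sup Q_j)$. The $i$-orthogonal skeleton is $\mathrm{Sk}_i=\bigcup_{Q\text{ cell}}\{z\in\overline Q: z_i\in\{\inf Q_i,\sup Q_i\}\}$. A T-junction is an entity $T$ of dimension $d-2$, $T\not\subset\partial\Omega$, such that fewer than four entities $F$ of dimension $d-1$ satisfy $T\subset\partial F$. For a T-junction with singleton components $T_i=\{t_i\}$, $T_j=\{t_j\}$ there is a unique cell $Q=\mathrm{ascell}(T)$ with $T\subset\partial Q$, $t_i\in Q_i$ and $t_j\in\{\inf Q_j,\sup Q_j\}$; then $\mathrm{odir}(T)=i$ and $\mathrm{pdir}(T)=j$. $\mathrm{conv}$ denotes convex hull. *)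

theory Defs
  imports "HOL-Analysis.Analysis"
begin

text \<open>An entity E = E_1 x ... x E_d is encoded componentwise: component k is a pair
  (a,b) of naturals with a \<le> b; (a,a) encodes the singleton {a}, (a,b) with a < b encodes
  the open interval (a,b). Directions are the elements of the finite type 'n, d = CARD('n).\<close>

type_synonym 'n entity = "'n \<Rightarrow> nat \<times> nat"

definition comp_set :: "nat \<times> nat \<Rightarrow> real set" where
  "comp_set c = (if fst c = snd c then {real (fst c)} else {real (fst c)<..<real (snd c)})"

definition ent_set :: "('n::finite) entity \<Rightarrow> (real^'n) set" where
  "ent_set E = {z. \<forall>k. z$k \<in> comp_set (E k)}"

definition edim :: "('n::finite) entity \<Rightarrow> nat" where
  "edim E = card {k. fst (E k) < snd (E k)}"

definition is_cell :: "('n::finite) entity \<Rightarrow> bool" where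
  "is_cell E \<longleftrightarrow> (\<forall>k. fst (E k) < snd (E k))"

definition qdeg :: "('n \<Rightarrow> nat) \<Rightarrow> 'n \<Rightarrow> nat" where
  "qdeg p k = (p k + 1) div 2"

definition Omega :: "('n::finite \<Rightarrow> nat) \<Rightarrow> (real^'n) set" where
  "Omega N = {z. \<forall>k. 0 < z$k \<and> z$k < real (N k)}"

definition AR :: "('n::finite \<Rightarrow> nat) \<Rightarrow> ('n \<Rightarrow> nat) \<Rightarrow> (real^'n) set" where
  "AR N p = {z. \<forall>k. real (qdeg p k) \<le> z$k \<and> z$k \<le> real (N k) - real (qdeg p k)}"

definition grid_ok :: "('n \<Rightarrow> nat) \<Rightarrow> ('n \<Rightarrow> nat) \<Rightarrow> ('n \<Rightarrow> nat set) \<Rightarrow> bool" where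
  "grid_ok N p G \<longleftrightarrow> (\<forall>k. G k \<subseteq> {0..N k} \<and> {0..qdeg p k} \<subseteq> G k
      \<and> {N k - qdeg p k..N k} \<subseteq> G k)"

definition tp_mesh :: "('n \<Rightarrow> nat set) \<Rightarrow> 'n entity set" where
  "tp_mesh G = {E. \<forall>k. (fst (E k) = snd (E k) \<and> fst (E k) \<in> G k)
      \<or> (fst (E k) < snd (E k) \<and> fst (E k) \<in> G k \<and> snd (E k) \<in> G k
          \<and> (\<forall>g\<in>G k. \<not> (fst (E k) < g \<and> g < snd (E k))))}"

definition subdiv_D :: "('n::finite \<Rightarrow> nat) \<Rightarrow> ('n \<Rightarrow> nat) \<Rightarrow> 'n entity \<Rightarrow> 'n \<Rightarrow> (real^'n) set" where
  "subdiv_D N p Q j = {z. \<forall>l.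
      (if l \<noteq> j \<and> fst (Q l) = qdeg p l then 0 else real (fst (Q l))) \<le> z$l \<and>
      z$l \<le> (if l \<noteq> j \<and> real (snd (Q l)) = real (N l) - real (qdeg p l)
               then real (N l) else real (snd (Q l)))}"

definition subdiv :: "('n::finite \<Rightarrow> nat) \<Rightarrow> ('n \<Rightarrow> nat) \<Rightarrow> 'n entity set \<Rightarrow> 'n entity \<Rightarrow> 'n
    \<Rightarrow> 'n entity set" where
  "subdiv N p M Q j =
    (let m = (fst (Q j) + snd (Q j)) div 2;
         S = {E \<in> M. ent_set E \<subseteq> subdiv_D N p Q j \<and> E j = Q j}
     in (M - S) \<union> (\<Union>E\<in>S. {E(j := (fst (Q j), m)), E(j := (m, m)), E(j := (m, snd (Q j)))}))"

inductive is_mesh :: "('n::finite \<Rightarrow> nat) \<Rightarrow> ('n \<Rightarrow> nat) \<Rightarrow> 'n entity set \<Rightarrow> bool"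
  for N p where
  tensor: "grid_ok N p G \<Longrightarrow> is_mesh N p (tp_mesh G)"
| step: "is_mesh N p M \<Longrightarrow> Q \<in> M \<Longrightarrow> is_cell Q \<Longrightarrow> ent_set Q \<subseteq> AR N p
          \<Longrightarrow> even (fst (Q j) + snd (Q j)) \<Longrightarrow> is_mesh N p (subdiv N p M Q j)"

definition skel :: "('n::finite) entity set \<Rightarrow> 'n \<Rightarrow> (real^'n) set" where
  "skel M i = (\<Union>Q\<in>{Q \<in> M. is_cell Q}.
      {z \<in> closure (ent_set Q). z$i \<in> {real (fst (Q i)), real (snd (Q i))}})"

definition is_tjunction :: "('n::finite \<Rightarrow> nat) \<Rightarrow> 'n entity set \<Rightarrow> 'n entity \<Rightarrow> bool" where
  "is_tjunction N M T \<longleftrightarrow> T \<in> M \<and> edim T = CARD('n) - 2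
     \<and> \<not> (ent_set T \<subseteq> frontier (Omega N))
     \<and> card {F \<in> M. edim F = CARD('n) - 1 \<and> ent_set T \<subseteq> rel_frontier (ent_set F)} < 4"

definition assoc_cell :: "('n::finite) entity set \<Rightarrow> 'n entity \<Rightarrow> 'n entity \<Rightarrow> 'n \<Rightarrow> 'n \<Rightarrow> bool" where
  "assoc_cell M T Q i j \<longleftrightarrow> Q \<in> M \<and> is_cell Q \<and> i \<noteq> j
     \<and> fst (T i) = snd (T i) \<and> fst (T j) = snd (T j)
     \<and> ent_set T \<subseteq> frontier (ent_set Q)
     \<and> real (fst (T i)) \<in> comp_set (Q i)
     \<and> real (fst (T j)) \<in> {real (fst (Q j)), real (snd (Q j))}"

definition ascell_data :: "('n::finite) entity set \<Rightarrow> 'n entity \<Rightarrow> 'n entity \<times> 'n \<times> 'n" where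
  "ascell_data M T = (THE c. assoc_cell M T (fst c) (fst (snd c)) (snd (snd c)))"

definition ascell :: "('n::finite) entity set \<Rightarrow> 'n entity \<Rightarrow> 'n entity" where
  "ascell M T = fst (ascell_data M T)"

definition odir :: "('n::finite) entity set \<Rightarrow> 'n entity \<Rightarrow> 'n" where
  "odir M T = fst (snd (ascell_data M T))"

definition pdir :: "('n::finite) entity set \<Rightarrow> 'n entity \<Rightarrow> 'n" where
  "pdir M T = snd (snd (ascell_data M T))"

end

theory Submission
  imports Defs
begin

definition ccl :: "nat \<times> nat \<Rightarrow> real set" where
  "ccl c = {real (fst c)..real (snd c)}"

definition ebox :: "('n::finite) entity \<Rightarrow> (real^'n) set" where
  "ebox E = {z. \<forall>k. z$k \<in> ccl (E k)}"

lemma ent_set_iff: "z \<in> ent_set E \<longleftrightarrow> (\<forall>k. z$k \<in> comp_set (E k))"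
  by (simp add: ent_set_def)

lemma ebox_iff: "z \<in> ebox E \<longleftrightarrow> (\<forall>k. z$k \<in> ccl (E k))"
  by (simp add: ebox_def)

lemma comp_set_sing: "fst c = snd c \<Longrightarrow> v \<in> comp_set c \<longleftrightarrow> v = real (fst c)"
  by (simp add: comp_set_def)

lemma comp_set_int: "fst c \<noteq> snd c \<Longrightarrow> v \<in> comp_set c \<longleftrightarrow> real (fst c) < v \<and> v < real (snd c)"
  by (simp add: comp_set_def)

lemma ccl_iff: "v \<in> ccl c \<longleftrightarrow> real (fst c) \<le> v \<and> v \<le> real (snd c)"
  by (simp add: ccl_def)

lemma closed_ebox: "closed (ebox E)"
proof -
  have "ebox E = (\<Inter>k. {z. real (fst (E k)) \<le> z$k} \<inter> {z. z$k \<le> real (snd (E k))})"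
    by (auto simp: ebox_def ccl_def)
  moreover have "closed {z::real^'a. a \<le> z$k}" for a k
    by (intro closed_Collect_le continuous_on_const continuous_on_component continuous_on_id)
  moreover have "closed {z::real^'a. z$k \<le> a}" for a k
    by (intro closed_Collect_le continuous_on_const continuous_on_component continuous_on_id)
  ultimately show ?thesis by (auto intro!: closed_INT closed_Int)
qed

lemma comp_set_sub_ccl: "fst c \<le> snd c \<Longrightarrow> comp_set c \<subseteq> ccl c"
  by (auto simp: comp_set_def ccl_def)

lemma ent_set_sub_ebox:
  assumes "\<forall>k. fst (E k) \<le> snd (E k)"
  shows "ent_set E \<subseteq> ebox E"
  using assms comp_set_sub_ccl unfolding ent_set_def ebox_def by blast

lemma closure_ent_set:
  assumes wf: "\<forall>k. fst (E k) \<le> snd (E k)"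
  shows "closure (ent_set E) = ebox E"
proof
  show "closure (ent_set E) \<subseteq> ebox E"
    using wf by (intro closure_minimal ent_set_sub_ebox closed_ebox)
next
  show "ebox E \<subseteq> closure (ent_set E)"
  proof
    fix z assume z: "z \<in> ebox E"
    define mid :: "real^'a" where "mid = (\<chi> k. (real (fst (E k)) + real (snd (E k))) / 2)"
    define w where "w = (\<lambda>l::real. z + l *\<^sub>R (mid - z))"
    have win: "w l \<in> ent_set E" if "0 < l" "l \<le> 1" for l
    proof -
      have "w l $ k \<in> comp_set (E k)" for k
      proof (cases "fst (E k) = snd (E k)")
        case True
        have "real (fst (E k)) \<le> z$k" "z$k \<le> real (snd (E k))" using z by (auto simp: ebox_def ccl_def)
        then have "z$k = real (fst (E k))" using True by simp
        then show ?thesis using True by (simp add: w_def mid_def comp_set_def)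
      next
        case False
        then have lt: "fst (E k) < snd (E k)" using wf le_neq_implies_less by blast
        have zk: "real (fst (E k)) \<le> z$k" "z$k \<le> real (snd (E k))" using z by (auto simp: ebox_def ccl_def)
        have "w l $ k = (1 - l) * z$k + l * ((real (fst (E k)) + real (snd (E k))) / 2)"
          by (simp add: w_def mid_def algebra_simps)
        moreover have "real (fst (E k)) < (1 - l) * z$k + l * ((real (fst (E k)) + real (snd (E k))) / 2)"
        proof -
          have eq: "(1 - l) * z$k + l * ((real (fst (E k)) + real (snd (E k))) / 2) - real (fst (E k))
              = (1 - l) * (z$k - real (fst (E k))) + l * ((real (snd (E k)) - real (fst (E k))) / 2)"
            by (simp add: field_simps)
          have "0 \<le> (1 - l) * (z$k - real (fst (E k)))" using zk that by simp
          moreover have "0 < l * ((real (snd (E k)) - real (fst (E k))) / 2)" using lt that by simp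
          ultimately show ?thesis using eq by linarith
        qed
        moreover have "(1 - l) * z$k + l * ((real (fst (E k)) + real (snd (E k))) / 2) < real (snd (E k))"
        proof -
          have eq: "real (snd (E k)) - ((1 - l) * z$k + l * ((real (fst (E k)) + real (snd (E k))) / 2))
              = (1 - l) * (real (snd (E k)) - z$k) + l * ((real (snd (E k)) - real (fst (E k))) / 2)"
            by (simp add: field_simps)
          have "0 \<le> (1 - l) * (real (snd (E k)) - z$k)" using zk that by simp
          moreover have "0 < l * ((real (snd (E k)) - real (fst (E k))) / 2)" using lt that by simp
          ultimately show ?thesis using eq by linarith
        qed
        ultimately show ?thesis using False by (simp add: comp_set_def)
      qed
      then show ?thesis by (simp add: ent_set_def)
    qed
    show "z \<in> closure (ent_set E)"
      unfolding closure_approachable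
    proof (intro allI impI)
      fix e :: real assume e: "e > 0"
      define l where "l = min 1 (e / (2 * (norm (mid - z) + 1)))"
      have "0 < e / (2 * (norm (mid - z) + 1))"
        using e by (intro divide_pos_pos) (auto intro: add_nonneg_pos)
      then have l0: "0 < l" "l \<le> 1" by (auto simp: l_def)
      have "dist (w l) z = l * norm (mid - z)" by (simp add: w_def dist_norm l0(1) less_imp_le)
      also have "\<dots> \<le> (e / (2 * (norm (mid - z) + 1))) * norm (mid - z)"
        by (intro mult_right_mono) (auto simp: l_def)
      also have "\<dots> < e"
      proof -
        have "(e / (2 * (norm (mid - z) + 1))) * norm (mid - z) = e * (norm (mid - z) / (2 * (norm (mid - z) + 1)))" by simp
        also have "\<dots> < e * 1"
        proof (intro mult_strict_left_mono e)
          have "norm (mid - z) < 2 * (norm (mid - z) + 1)" by (simp add: add_nonneg_pos)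
          then show "norm (mid - z) / (2 * (norm (mid - z) + 1)) < 1"
            by (simp add: divide_less_eq add_nonneg_pos)
        qed
        finally show ?thesis by simp
      qed
      finally show "\<exists>y\<in>ent_set E. dist y z < e" using win[OF l0] by blast
    qed
  qed
qed

lemma open_ent_set_cell:
  assumes "is_cell E"
  shows "open (ent_set E)"
proof -
  have "ent_set E = (\<Inter>k. {z. real (fst (E k)) < z$k} \<inter> {z. z$k < real (snd (E k))})"
  proof -
    have "comp_set (E k) = {real (fst (E k))<..<real (snd (E k))}" for k
      using assms[unfolded is_cell_def, rule_format, of k] by (auto simp: comp_set_def)
    then show ?thesis by (auto simp: ent_set_def)
  qed
  moreover have "open {z::real^'a. a < z$k}" for a k
    by (intro open_Collect_less continuous_on_const continuous_on_component continuous_on_id)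
  moreover have "open {z::real^'a. z$k < a}" for a k
    by (intro open_Collect_less continuous_on_const continuous_on_component continuous_on_id)
  ultimately show ?thesis by (auto intro!: open_INT open_Int)
qed

lemma Omega_ent: "Omega N = ent_set (\<lambda>k. (0, N k))" if "\<forall>k. N k \<ge> 1"
proof -
  have "comp_set (0, N k) = {0<..<real (N k)}" for k
    using that[rule_format, of k] by (auto simp: comp_set_def)
  then show ?thesis by (auto simp: ent_set_def Omega_def)
qed

lemma closure_Omega:
  assumes "\<forall>k. N k \<ge> 1"
  shows "closure (Omega N) = {z. \<forall>k. 0 \<le> z$k \<and> z$k \<le> real (N k)}"
  using assms by (simp add: Omega_ent closure_ent_set ebox_def ccl_def)

lemma open_Omega:
  assumes "\<forall>k. N k \<ge> 1"
  shows "open (Omega N)"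
proof -
  have "is_cell (\<lambda>k. (0::nat, N k))" using assms unfolding is_cell_def
    by (metis fst_conv snd_conv less_le_trans zero_less_one)
  then show ?thesis using assms by (simp add: Omega_ent open_ent_set_cell)
qed

definition ovl :: "nat \<times> nat \<Rightarrow> nat \<times> nat \<Rightarrow> bool" where
  "ovl x y = (if fst x = snd x \<and> fst y = snd y then fst x = fst y
    else if fst x = snd x then fst y < fst x \<and> fst x < snd y
    else if fst y = snd y then fst x < fst y \<and> fst y < snd x
    else fst x < snd y \<and> fst y < snd x)"

definition meetc :: "nat \<times> nat \<Rightarrow> nat \<times> nat \<Rightarrow> bool" where
  "meetc x e = (if fst x = snd x then fst e \<le> fst x \<and> fst x \<le> snd e
    else fst x < snd e \<and> fst e < snd x)"

definition withinc :: "nat \<times> nat \<Rightarrow> nat \<times> nat \<Rightarrow> bool" where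
  "withinc x e = (fst e \<le> fst x \<and> snd x \<le> snd e)"

lemma ovl_of_common:
  assumes "fst x \<le> snd x" "fst y \<le> snd y" "v \<in> comp_set x" "v \<in> comp_set y"
  shows "ovl x y"
  using assms by (auto simp: ovl_def comp_set_def split: if_splits)

lemma meetc_of_common:
  assumes "fst x \<le> snd x" "fst e \<le> snd e" "v \<in> comp_set x" "v \<in> ccl e"
  shows "meetc x e"
  using assms by (auto simp: meetc_def comp_set_def ccl_def split: if_splits)

lemma withinc_sub:
  assumes "withinc x e" "fst x \<le> snd x"
  shows "comp_set x \<subseteq> ccl e"
  using assms by (auto simp: withinc_def comp_set_def ccl_def split: if_splits)

definition consec :: "('n \<Rightarrow> nat set) \<Rightarrow> 'n \<Rightarrow> nat \<Rightarrow> nat \<Rightarrow> bool" where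
  "consec G k a b \<longleftrightarrow> a \<in> G k \<and> b \<in> G k \<and> a < b \<and> (\<forall>h\<in>G k. \<not> (a < h \<and> h < b))"

definition dy :: "('n \<Rightarrow> nat set) \<Rightarrow> 'n \<Rightarrow> nat \<times> nat \<Rightarrow> bool" where
  "dy G k c \<longleftrightarrow> (\<exists>g h n t l. consec G k g h \<and> l * 2^n = h - g \<and> fst c = g + t * l
       \<and> snd c = g + (t + 1) * l \<and> snd c \<le> h)"

lemma consec_disj:
  assumes "consec G k g h" "consec G k g2 h2"
  shows "(g = g2 \<and> h = h2) \<or> h \<le> g2 \<or> h2 \<le> g"
  using assms unfolding consec_def
  by (metis linorder_neqE_nat not_le)

lemma dy_arith_le:
  fixes n n' t t' l l' :: nat
  assumes "l * 2^n = L" "l' * 2^n' = L" "n \<le> n'"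
  shows "(t+1)*l \<le> t'*l' \<or> (t'+1)*l' \<le> t*l \<or> (t*l \<le> t'*l' \<and> (t'+1)*l' \<le> (t+1)*l)"
proof -
  define q where "q = (2::nat)^(n' - n)"
  have "(2::nat)^n' = 2^n * q" unfolding q_def using assms(3)
    by (metis le_add_diff_inverse power_add)
  then have "l * 2^n = (l' * q) * 2^n" using assms by (simp add: ac_simps)
  then have lq: "l = l' * q" by simp
  consider "t' + 1 \<le> t * q" | "t * q + q \<le> t'" | "t * q \<le> t'" "t' + 1 \<le> t * q + q" by linarith
  then show ?thesis
  proof cases
    case 1
    then have "(t'+1)*l' \<le> (t*q)*l'" by (rule mult_le_mono1)
    then show ?thesis by (simp add: lq ac_simps)
  next
    case 2
    then have "(t*q+q)*l' \<le> t'*l'" by (rule mult_le_mono1)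
    then show ?thesis by (simp add: lq algebra_simps)
  next
    case 3
    from 3(1) have "(t*q)*l' \<le> t'*l'" by (rule mult_le_mono1)
    moreover from 3(2) have "(t'+1)*l' \<le> (t*q+q)*l'" by (rule mult_le_mono1)
    ultimately show ?thesis by (simp add: lq algebra_simps)
  qed
qed

lemma dy_arith:
  fixes n n' t t' l l' :: nat
  assumes "l * 2^n = L" "l' * 2^n' = L"
  shows "(t+1)*l \<le> t'*l' \<or> (t'+1)*l' \<le> t*l \<or> (t*l \<le> t'*l' \<and> (t'+1)*l' \<le> (t+1)*l)
     \<or> (t'*l' \<le> t*l \<and> (t+1)*l \<le> (t'+1)*l')"
proof (cases "n \<le> n'")
  case True
  then show ?thesis using dy_arith_le[OF assms True, of t t'] by blast
next
  case False
  then have nn: "n' \<le> n" by simp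
  show ?thesis using dy_arith_le[OF assms(2,1) nn, of t' t] by blast
qed

lemma dy_half_arith:
  fixes n n' t t' l l' :: nat
  assumes "l * 2^n = L" "l' * 2^n' = L" "0 < l"
    and "t'*l' \<le> t*l" "(t+1)*l \<le> (t'+1)*l'" "\<not> (t*l = t'*l' \<and> (t+1)*l = (t'+1)*l')"
  shows "2*((t+1)*l) \<le> (2*t'+1)*l' \<or> (2*t'+1)*l' \<le> 2*(t*l)"
proof -
  have "l \<le> l'" using assms(4,5) by (simp add: algebra_simps)
  have "l \<noteq> l'"
  proof
    assume "l = l'"
    then have "t' \<le> t" "t \<le> t'" using assms(3,4,5) by (auto simp: mult_le_cancel2)
    then show False using assms(6) \<open>l = l'\<close> by simp
  qed
  have "n' < n"
  proof (rule ccontr)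
    assume "\<not> n' < n"
    then have "n \<le> n'" by simp
    then have "(2::nat)^n' = 2^n * 2^(n'-n)" by (metis le_add_diff_inverse power_add)
    then have "l * 2^n = (l' * 2^(n'-n)) * 2^n" using assms by (simp add: ac_simps)
    then have "l = l' * 2^(n'-n)" by simp
    moreover have "(1::nat) \<le> 2^(n'-n)" by simp
    ultimately have "l' \<le> l" by (metis mult.right_neutral mult_le_mono2)
    then show False using \<open>l \<le> l'\<close> \<open>l \<noteq> l'\<close> by simp
  qed
  define w where "w = (2::nat)^(n - n' - 1)"
  have "(2::nat)^n = 2^n' * (2 * w)" unfolding w_def using \<open>n' < n\<close>
    by (metis Suc_diff_Suc le_add_diff_inverse less_imp_le_nat power_Suc power_add diff_Suc_1 Suc_diff_le)
  then have "l' * 2^n' = (l * (2*w)) * 2^n'" using assms by (simp add: ac_simps)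
  then have lw: "l' = l * (2 * w)" by simp
  have "t + 1 \<le> (2*t'+1)*w \<or> (2*t'+1)*w \<le> t" by linarith
  then show ?thesis
  proof
    assume "t + 1 \<le> (2*t'+1)*w"
    then have "(t+1)*(2*l) \<le> ((2*t'+1)*w)*(2*l)" by (rule mult_le_mono1)
    then show ?thesis by (simp add: lw algebra_simps)
  next
    assume "(2*t'+1)*w \<le> t"
    then have "((2*t'+1)*w)*(2*l) \<le> t*(2*l)" by (rule mult_le_mono1)
    then show ?thesis by (simp add: lw algebra_simps)
  qed
qed

lemma dy_lam:
  assumes "dy G k I" "dy G k I'"
  shows "withinc I I' \<or> withinc I' I \<or> snd I \<le> fst I' \<or> snd I' \<le> fst I"
proof -
  obtain g h n t l where A: "consec G k g h" "l * 2^n = h - g" "fst I = g + t * l"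
       "snd I = g + (t + 1) * l" "snd I \<le> h"
    using assms(1) unfolding dy_def by blast
  obtain g2 h2 n2 t2 l2 where B: "consec G k g2 h2" "l2 * 2^n2 = h2 - g2" "fst I' = g2 + t2 * l2"
       "snd I' = g2 + (t2 + 1) * l2" "snd I' \<le> h2"
    using assms(2) unfolding dy_def by blast
  consider "g = g2 \<and> h = h2" | "h \<le> g2" | "h2 \<le> g" using consec_disj[OF A(1) B(1)] by blast
  then show ?thesis
  proof cases
    case 1
    then have "l2 * 2^n2 = h - g" using B by simp
    from dy_arith[OF A(2) this, of t t2] show ?thesis
      using A B 1 unfolding withinc_def by auto
  next
    case 2
    then show ?thesis using A B by (simp add: withinc_def)
  next
    case 3
    then show ?thesis using A B by (simp add: withinc_def)
  qed
qed

lemma dy_half: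
  assumes "dy G k I" "dy G k I'" "fst I < snd I" "withinc I I'" "I \<noteq> I'"
  shows "2 * snd I \<le> fst I' + snd I' \<or> fst I' + snd I' \<le> 2 * fst I"
proof -
  obtain g h n t l where A: "consec G k g h" "l * 2^n = h - g" "fst I = g + t * l"
       "snd I = g + (t + 1) * l" "snd I \<le> h"
    using assms(1) unfolding dy_def by blast
  obtain g2 h2 n2 t2 l2 where B: "consec G k g2 h2" "l2 * 2^n2 = h2 - g2" "fst I' = g2 + t2 * l2"
       "snd I' = g2 + (t2 + 1) * l2" "snd I' \<le> h2"
    using assms(2) unfolding dy_def by blast
  have "0 < l" using A assms(3) by simp
  have "l2 * 2^n2 = h - g \<and> g2 = g"
  proof -
    consider "g = g2 \<and> h = h2" | "h \<le> g2" | "h2 \<le> g" using consec_disj[OF A(1) B(1)] by blast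
    then show ?thesis
    proof cases
      case 1 then show ?thesis using B by simp
    next
      case 2 then show ?thesis using A B assms(3,4) by (simp add: withinc_def)
    next
      case 3 then show ?thesis using A B assms(3,4) by (simp add: withinc_def)
    qed
  qed
  then have B2: "l2 * 2^n2 = h - g" "g2 = g" by auto
  have ne: "\<not> (t*l = t2*l2 \<and> (t+1)*l = (t2+1)*l2)"
    using assms(5) A B B2 by (metis prod.collapse)
  have w: "t2*l2 \<le> t*l" "(t+1)*l \<le> (t2+1)*l2" using assms(4) A B B2 by (auto simp: withinc_def)
  have D: "2*((t+1)*l) \<le> (2*t2+1)*l2 \<or> (2*t2+1)*l2 \<le> 2*(t*l)"
    by (rule dy_half_arith[OF A(2) B2(1) \<open>0<l\<close> w ne])
  have e1: "(t+1)*l = t*l + l" "(t2+1)*l2 = t2*l2 + l2" "(2*t2+1)*l2 = 2*(t2*l2) + l2"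
    by (simp_all add: algebra_simps)
  show ?thesis using D unfolding A(3,4) B(3,4) B2(2) e1 by (elim disjE) simp_all
qed

definition minv :: "('n::finite \<Rightarrow> nat) \<Rightarrow> ('n \<Rightarrow> nat set) \<Rightarrow> 'n entity set \<Rightarrow> bool" where
 "minv N G M \<longleftrightarrow> (\<forall>E\<in>M. \<forall>k. fst (E k) \<le> snd (E k) \<and> snd (E k) \<le> N k) \<and>
   (\<forall>E\<in>M. \<forall>E'\<in>M. E \<noteq> E' \<longrightarrow> (\<exists>k. \<not> ovl (E k) (E' k))) \<and>
   (\<forall>z::real^'n. (\<forall>k. 0 \<le> z$k \<and> z$k \<le> real (N k)) \<longrightarrow> (\<exists>E\<in>M. z \<in> ent_set E)) \<and>
   (\<forall>E\<in>M. \<forall>X\<in>M. (\<forall>k. meetc (X k) (E k)) \<longrightarrow> (\<forall>k. withinc (X k) (E k))) \<and>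
   (\<forall>E\<in>M. \<forall>k. fst (E k) < snd (E k) \<longrightarrow> dy G k (E k))"

definition tpc :: "('n \<Rightarrow> nat set) \<Rightarrow> 'n \<Rightarrow> nat \<times> nat \<Rightarrow> bool" where
  "tpc G k c \<longleftrightarrow> (fst c = snd c \<and> fst c \<in> G k) \<or> (fst c < snd c \<and> fst c \<in> G k \<and> snd c \<in> G k
          \<and> (\<forall>g\<in>G k. \<not> (fst c < g \<and> g < snd c)))"

lemma tp_mesh_iff: "E \<in> tp_mesh G \<longleftrightarrow> (\<forall>k. tpc G k (E k))"
  by (simp add: tp_mesh_def tpc_def)

lemma ovl_sym: "ovl x y = ovl y x"
  by (auto simp: ovl_def)

lemma tpc_ovl: "tpc G k x \<Longrightarrow> tpc G k y \<Longrightarrow> ovl x y \<Longrightarrow> x = y"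
  unfolding tpc_def ovl_def
  by (cases x; cases y; simp split: if_splits; metis linorder_neqE_nat)

lemma tpc_meet: "tpc G k x \<Longrightarrow> tpc G k e \<Longrightarrow> meetc x e \<Longrightarrow> withinc x e"
  unfolding tpc_def meetc_def withinc_def
  by (cases x; cases e; simp split: if_splits; metis linorder_neqE_nat less_imp_le_nat order_refl)

lemma grid_comp_exists:
  fixes v :: real and Gk :: "nat set"
  assumes fin: "finite Gk" and z0: "0 \<in> Gk" and zN: "Nk \<in> Gk" and v: "0 \<le> v" "v \<le> real Nk"
  shows "\<exists>c. ((fst c = snd c \<and> fst c \<in> Gk) \<or> (fst c < snd c \<and> fst c \<in> Gk \<and> snd c \<in> Gk
          \<and> (\<forall>g\<in>Gk. \<not> (fst c < g \<and> g < snd c)))) \<and> v \<in> comp_set c"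
proof (cases "\<exists>g\<in>Gk. real g = v")
  case True
  then obtain g where "g \<in> Gk" "real g = v" by blast
  then show ?thesis by (intro exI[of _ "(g,g)"]) (auto simp: comp_set_def)
next
  case False
  define L where "L = {g\<in>Gk. real g < v}"
  define U where "U = {g\<in>Gk. v < real g}"
  have "0 \<in> L" using False z0 v by (force simp: L_def)
  have "Nk \<in> U" using False zN v by (force simp: U_def)
  have fL: "finite L" "finite U" using fin by (auto simp: L_def U_def)
  define a where "a = Max L"
  define b where "b = Min U"
  have aL: "a \<in> L" using fL \<open>0 \<in> L\<close> by (auto simp: a_def intro: Max_in)
  have bU: "b \<in> U" using fL \<open>Nk \<in> U\<close> by (auto simp: b_def intro: Min_in)
  have av: "real a < v" and bv: "v < real b" using aL bU by (auto simp: L_def U_def)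
  then have ab: "a < b" by linarith
  have gap: "\<forall>g\<in>Gk. \<not> (a < g \<and> g < b)"
  proof (intro ballI notI)
    fix g assume g: "g \<in> Gk" "a < g \<and> g < b"
    have "real g \<noteq> v" using False g by blast
    then consider "real g < v" | "v < real g" by linarith
    then show False
    proof cases
      case 1 then have "g \<in> L" using g by (simp add: L_def)
      then have "g \<le> a" using fL by (simp add: a_def)
      then show False using g by simp
    next
      case 2 then have "g \<in> U" using g by (simp add: U_def)
      then have "b \<le> g" using fL by (simp add: b_def)
      then show False using g by simp
    qed
  qed
  show ?thesis
    using aL bU ab gap av bv by (intro exI[of _ "(a,b)"]) (auto simp: comp_set_def L_def U_def)
qed

lemma minv_tp:
  assumes "grid_ok N p G"
  shows "minv N G (tp_mesh G)"
proof -
  have GN: "G k \<subseteq> {0..N k}" "0 \<in> G k" "N k \<in> G k" for k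
  proof -
    have g: "G k \<subseteq> {0..N k}" "{0..qdeg p k} \<subseteq> G k" "{N k - qdeg p k..N k} \<subseteq> G k"
      using assms unfolding grid_ok_def by auto
    then show "G k \<subseteq> {0..N k}" "0 \<in> G k" "N k \<in> G k" by auto
  qed
  have fin: "finite (G k)" for k using GN(1) finite_subset by blast
  have W: "\<forall>E\<in>tp_mesh G. \<forall>k. fst (E k) \<le> snd (E k) \<and> snd (E k) \<le> N k"
  proof (intro ballI allI)
    fix E k assume "E \<in> tp_mesh G"
    then have "tpc G k (E k)" by (simp add: tp_mesh_iff)
    then show "fst (E k) \<le> snd (E k) \<and> snd (E k) \<le> N k"
      using GN(1)[of k] unfolding tpc_def by auto
  qed
  have D: "\<forall>E\<in>tp_mesh G. \<forall>E'\<in>tp_mesh G. E \<noteq> E' \<longrightarrow> (\<exists>k. \<not> ovl (E k) (E' k))"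
  proof (intro ballI impI)
    fix E E' assume E: "E \<in> tp_mesh G" "E' \<in> tp_mesh G" "E \<noteq> E'"
    then obtain k where "E k \<noteq> E' k" by blast
    then show "\<exists>k. \<not> ovl (E k) (E' k)"
      using tpc_ovl E(1,2) by (metis tp_mesh_iff)
  qed
  have Cov: "\<forall>z::real^'a. (\<forall>k. 0 \<le> z$k \<and> z$k \<le> real (N k)) \<longrightarrow> (\<exists>E\<in>tp_mesh G. z \<in> ent_set E)"
  proof (intro allI impI)
    fix z :: "real^'a" assume z: "\<forall>k. 0 \<le> z$k \<and> z$k \<le> real (N k)"
    have "\<forall>k. \<exists>c. tpc G k c \<and> z$k \<in> comp_set c"
      using grid_comp_exists[OF fin GN(2) GN(3)] z unfolding tpc_def by blast
    then obtain E where "\<forall>k. tpc G k (E k) \<and> z$k \<in> comp_set (E k)" by metis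
    then show "\<exists>E\<in>tp_mesh G. z \<in> ent_set E" by (auto simp: tp_mesh_iff ent_set_def)
  qed
  have Cl: "\<forall>E\<in>tp_mesh G. \<forall>X\<in>tp_mesh G. (\<forall>k. meetc (X k) (E k)) \<longrightarrow> (\<forall>k. withinc (X k) (E k))"
    using tpc_meet by (metis tp_mesh_iff)
  have Dy: "\<forall>E\<in>tp_mesh G. \<forall>k. fst (E k) < snd (E k) \<longrightarrow> dy G k (E k)"
  proof (intro ballI allI impI)
    fix E k assume a: "E \<in> tp_mesh G" "fst (E k) < snd (E k)"
    then have "tpc G k (E k)" by (simp add: tp_mesh_iff)
    then have c: "consec G k (fst (E k)) (snd (E k))"
      using a(2) by (auto simp: tpc_def consec_def)
    show "dy G k (E k)" unfolding dy_def
      by (rule exI[of _ "fst (E k)"], rule exI[of _ "snd (E k)"], rule exI[of _ 0], rule exI[of _ 0],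
          rule exI[of _ "snd (E k) - fst (E k)"]) (use c in \<open>auto simp: consec_def\<close>)
  qed
  show ?thesis unfolding minv_def using W D Cov Cl Dy by blast
qed

definition pcs :: "nat \<Rightarrow> nat \<Rightarrow> nat \<Rightarrow> (nat \<times> nat) set" where
  "pcs lo m hi = {(lo, m), (m, m), (m, hi)}"

lemma pcs_basic: "lo < m \<Longrightarrow> m < hi \<Longrightarrow> I \<in> pcs lo m hi \<Longrightarrow> fst I \<le> snd I \<and> lo \<le> fst I \<and> snd I \<le> hi"
  by (auto simp: pcs_def)

lemma p2: "lo < m \<Longrightarrow> m < hi \<Longrightarrow> I \<in> pcs lo m hi \<Longrightarrow> meetc I e \<Longrightarrow> meetc (lo, hi) e"
  by (auto simp: pcs_def meetc_def split: if_splits)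

lemma p3: "lo < m \<Longrightarrow> m < hi \<Longrightarrow> I \<in> pcs lo m hi \<Longrightarrow> meetc x I \<Longrightarrow> meetc x (lo, hi)"
  by (auto simp: pcs_def meetc_def split: if_splits)

lemma p5: "lo < m \<Longrightarrow> m < hi \<Longrightarrow> I \<in> pcs lo m hi \<Longrightarrow> ovl y I \<Longrightarrow> ovl y (lo, hi)"
  by (auto simp: pcs_def ovl_def split: if_splits)

lemma p6: "lo < m \<Longrightarrow> m < hi \<Longrightarrow> I \<in> pcs lo m hi \<Longrightarrow> withinc (lo, hi) e \<Longrightarrow> withinc I e"
  by (auto simp: pcs_def withinc_def)

lemma p7: "lo < m \<Longrightarrow> m < hi \<Longrightarrow> I \<in> pcs lo m hi \<Longrightarrow> I' \<in> pcs lo m hi \<Longrightarrow> meetc I' I \<Longrightarrow> withinc I' I"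
  by (auto simp: pcs_def meetc_def withinc_def split: if_splits)

lemma p8: "lo < m \<Longrightarrow> m < hi \<Longrightarrow> I \<in> pcs lo m hi \<Longrightarrow> I' \<in> pcs lo m hi \<Longrightarrow> I \<noteq> I' \<Longrightarrow> \<not> ovl I I'"
  by (auto simp: pcs_def ovl_def split: if_splits)

lemma p9: "lo < m \<Longrightarrow> m < hi \<Longrightarrow> 2 * m = lo + hi \<Longrightarrow> I \<in> pcs lo m hi \<Longrightarrow> fst x < snd x \<Longrightarrow>
    (2 * snd x \<le> lo + hi \<or> lo + hi \<le> 2 * fst x) \<Longrightarrow> withinc x (lo, hi) \<Longrightarrow> meetc x I \<Longrightarrow> withinc x I"
  by (auto simp: pcs_def meetc_def withinc_def split: if_splits)

lemma p10: "lo < m \<Longrightarrow> m < hi \<Longrightarrow> v \<in> comp_set (lo, hi) \<Longrightarrow> \<exists>I\<in>pcs lo m hi. v \<in> comp_set I"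
  by (cases "v < real m"; cases "v = real m") (auto simp: pcs_def comp_set_def)

lemma meetc_sing: "fst x = snd x \<Longrightarrow> meetc x I \<Longrightarrow> withinc x I"
  by (auto simp: meetc_def withinc_def)

lemma dy_halves:
  assumes "dy G k (lo, hi)" "lo < hi" "even (lo + hi)"
  shows "dy G k (lo, (lo + hi) div 2)" "dy G k ((lo + hi) div 2, hi)"
proof -
  obtain g h n t l where A: "consec G k g h" "l * 2^n = h - g" "lo = g + t * l"
       "hi = g + (t + 1) * l" "hi \<le> h"
    using assms(1) unfolding dy_def fst_conv snd_conv by blast
  have "lo + hi = 2 * (g + t * l) + l" using A(3,4) by (simp add: algebra_simps)
  then have "even l" using assms(3) by simp
  then obtain l2 where l2: "l = 2 * l2" by blast
  have m: "(lo + hi) div 2 = g + (2*t+1) * l2" using A(3,4) l2 by (simp add: algebra_simps)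
  have e1: "l2 * 2^(Suc n) = h - g" using A(2) l2 by (simp add: ac_simps)
  show "dy G k (lo, (lo + hi) div 2)" unfolding dy_def
    apply (rule exI[of _ g], rule exI[of _ h], rule exI[of _ "Suc n"], rule exI[of _ "2*t"], rule exI[of _ l2])
    using A e1 m l2 by (auto simp: algebra_simps)
  show "dy G k ((lo + hi) div 2, hi)" unfolding dy_def
    apply (rule exI[of _ g], rule exI[of _ h], rule exI[of _ "Suc n"], rule exI[of _ "2*t+1"], rule exI[of _ l2])
    using A e1 m l2 by (auto simp: algebra_simps)
qed

lemma ent_set_upd: "z \<in> ent_set (E(j := I)) \<longleftrightarrow> z$j \<in> comp_set I \<and> (\<forall>k. k \<noteq> j \<longrightarrow> z$k \<in> comp_set (E k))"
  by (auto simp: ent_set_def)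

lemma minv_subdiv_gen:
  fixes Q :: "('n::finite) entity"
  assumes inv: "minv N G M" and QM: "Q \<in> M" and cell: "is_cell Q" and ev: "even (fst (Q j) + snd (Q j))"
    and SM: "S \<subseteq> M" and Sj: "\<forall>E\<in>S. E j = Q j"
    and Scl: "\<forall>E\<in>S. \<forall>X\<in>M. (\<forall>k. withinc (X k) (E k)) \<longrightarrow> X j = Q j \<longrightarrow> X \<in> S"
  shows "minv N G ((M - S) \<union> (\<Union>E\<in>S. {E(j := (fst (Q j), (fst (Q j) + snd (Q j)) div 2)),
      E(j := ((fst (Q j) + snd (Q j)) div 2, (fst (Q j) + snd (Q j)) div 2)),
      E(j := ((fst (Q j) + snd (Q j)) div 2, snd (Q j)))}))"
    (is "minv N G ?M'")
proof -
  define lo where "lo = fst (Q j)"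
  define hi where "hi = snd (Q j)"
  define m where "m = (lo + hi) div 2"
  have lohi: "lo < hi" using cell by (simp add: is_cell_def lo_def hi_def)
  have ev2: "even (lo + hi)" using ev by (simp add: lo_def hi_def)
  have m2: "2 * m = lo + hi" using ev2 by (simp add: m_def)
  have lom: "lo < m" "m < hi" using lohi m2 by linarith+
  have Qj: "Q j = (lo, hi)" by (simp add: lo_def hi_def)
  have M'eq: "?M' = (M - S) \<union> (\<Union>E\<in>S. (\<lambda>I. E(j := I)) ` pcs lo m hi)"
    by (simp add: pcs_def lo_def hi_def m_def)
  have mem: "X \<in> ?M' \<longleftrightarrow> (X \<in> M \<and> X \<notin> S) \<or> (\<exists>E\<in>S. \<exists>I\<in>pcs lo m hi. X = E(j := I))" for X
    unfolding M'eq by blast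
  have W: "\<forall>E\<in>M. \<forall>k. fst (E k) \<le> snd (E k) \<and> snd (E k) \<le> N k" using inv unfolding minv_def by (elim conjE) assumption
  have D: "\<forall>E\<in>M. \<forall>E'\<in>M. E \<noteq> E' \<longrightarrow> (\<exists>k. \<not> ovl (E k) (E' k))" using inv unfolding minv_def by (elim conjE) assumption
  have Cov: "\<forall>z::real^'n. (\<forall>k. 0 \<le> z$k \<and> z$k \<le> real (N k)) \<longrightarrow> (\<exists>E\<in>M. z \<in> ent_set E)" using inv unfolding minv_def by (elim conjE) assumption
  have Cl: "\<forall>E\<in>M. \<forall>X\<in>M. (\<forall>k. meetc (X k) (E k)) \<longrightarrow> (\<forall>k. withinc (X k) (E k))" using inv unfolding minv_def by (elim conjE) assumption
  have Dy: "\<forall>E\<in>M. \<forall>k. fst (E k) < snd (E k) \<longrightarrow> dy G k (E k)" using inv unfolding minv_def by (elim conjE) assumption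
  have ES: "E \<in> M" "E j = (lo, hi)" if "E \<in> S" for E using that SM Sj Qj by auto
  have ovlQ: "ovl (lo, hi) (lo, hi)" using lohi by (simp add: ovl_def)
  have meetQ: "meetc (lo, hi) (lo, hi)" using lohi by (simp add: meetc_def)
  have dyQ: "dy G j (lo, hi)"
  proof -
    have "fst (Q j) < snd (Q j)" using lohi Qj by simp
    then have "dy G j (Q j)" using Dy QM by blast
    then show ?thesis using Qj by simp
  qed
  have W': "\<forall>E\<in>?M'. \<forall>k. fst (E k) \<le> snd (E k) \<and> snd (E k) \<le> N k"
  proof (intro ballI allI)
    fix X k assume "X \<in> ?M'"
    then consider "X \<in> M" | E I where "E \<in> S" "I \<in> pcs lo m hi" "X = E(j := I)" using mem by blast
    then show "fst (X k) \<le> snd (X k) \<and> snd (X k) \<le> N k"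
    proof cases
      case 1 then show ?thesis using W by blast
    next
      case 2
      have "snd (E j) \<le> N j" using W ES[OF 2(1)] by blast
      then show ?thesis using 2 W ES[OF 2(1)] pcs_basic[OF lom 2(2)] by auto
    qed
  qed
  have D': "\<forall>A\<in>?M'. \<forall>B\<in>?M'. A \<noteq> B \<longrightarrow> (\<exists>k. \<not> ovl (A k) (B k))"
  proof (intro ballI impI)
    fix A B assume A: "A \<in> ?M'" and B: "B \<in> ?M'" and AB: "A \<noteq> B"
    have oldnew: "\<exists>k. \<not> ovl (X k) ((E(j := I)) k)"
      if on: "X \<in> M" "X \<notin> S" "E \<in> S" "I \<in> pcs lo m hi" for X E I
    proof -
      have "X \<noteq> E" using on by blast
      then obtain k where k: "\<not> ovl (X k) (E k)" using D on ES by blast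
      show ?thesis
      proof (cases "k = j")
        case True
        then have "\<not> ovl (X j) I" using k p5[OF lom on(4), of "X j"] ES[OF on(3)] by auto
        then show ?thesis using True by (intro exI[of _ j]) simp
      next
        case False then show ?thesis using k by (intro exI[of _ k]) simp
      qed
    qed
    from A consider "A \<in> M" "A \<notin> S" | E I where "E \<in> S" "I \<in> pcs lo m hi" "A = E(j := I)" using mem by blast
    then show "\<exists>k. \<not> ovl (A k) (B k)"
    proof cases
      case 1
      from B consider "B \<in> M" "B \<notin> S" | E I where "E \<in> S" "I \<in> pcs lo m hi" "B = E(j := I)" using mem by blast
      then show ?thesis
      proof cases
        case 1 then show ?thesis using D \<open>A \<in> M\<close> AB by blast
      next
        case 2 then show ?thesis using oldnew[OF \<open>A \<in> M\<close> \<open>A \<notin> S\<close> 2(1,2)] by simp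
      qed
    next
      case A2: 2
      from B consider "B \<in> M" "B \<notin> S" | E' I' where "E' \<in> S" "I' \<in> pcs lo m hi" "B = E'(j := I')" using mem by blast
      then show ?thesis
      proof cases
        case 1 then show ?thesis using oldnew[OF 1 A2(1,2)] A2(3) by (metis ovl_sym)
      next
        case 2
        show ?thesis
        proof (cases "E = E'")
          case True
          then have "I \<noteq> I'" using AB A2(3) 2(3) by auto
          then show ?thesis using p8[OF lom A2(2) 2(2)] A2(3) 2(3) by (intro exI[of _ j]) simp
        next
          case False
          then obtain k where k: "\<not> ovl (E k) (E' k)" using D ES A2(1) 2(1) by blast
          have "k \<noteq> j" using k ES[OF A2(1)] ES[OF 2(1)] ovlQ by auto
          then show ?thesis using k A2(3) 2(3) by (intro exI[of _ k]) simp
        qed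
      qed
    qed
  qed
  have Cov': "\<forall>z::real^'n. (\<forall>k. 0 \<le> z$k \<and> z$k \<le> real (N k)) \<longrightarrow> (\<exists>E\<in>?M'. z \<in> ent_set E)"
  proof (intro allI impI)
    fix z :: "real^'n" assume "\<forall>k. 0 \<le> z$k \<and> z$k \<le> real (N k)"
    then obtain E where E: "E \<in> M" "z \<in> ent_set E" using Cov by blast
    show "\<exists>E\<in>?M'. z \<in> ent_set E"
    proof (cases "E \<in> S")
      case False then show ?thesis using E mem by blast
    next
      case True
      then have "z$j \<in> comp_set (lo, hi)" using E(2) ES by (metis ent_set_iff)
      then obtain I where I: "I \<in> pcs lo m hi" "z$j \<in> comp_set I" using p10[OF lom] by blast
      have "z \<in> ent_set (E(j := I))" using E(2) I(2) by (auto simp: ent_set_upd ent_set_iff)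
      then show ?thesis using mem True I(1) by blast
    qed
  qed
  have Cl': "\<forall>A\<in>?M'. \<forall>B\<in>?M'. (\<forall>k. meetc (B k) (A k)) \<longrightarrow> (\<forall>k. withinc (B k) (A k))"
  proof (intro ballI impI)
    fix A B assume A: "A \<in> ?M'" and B: "B \<in> ?M'" and mt: "\<forall>k. meetc (B k) (A k)"
    from A consider "A \<in> M" "A \<notin> S" | E I where "E \<in> S" "I \<in> pcs lo m hi" "A = E(j := I)" using mem by blast
    then show "\<forall>k. withinc (B k) (A k)"
    proof cases
      case A1: 1
      from B consider "B \<in> M" "B \<notin> S" | X I' where "X \<in> S" "I' \<in> pcs lo m hi" "B = X(j := I')" using mem by blast
      then show ?thesis
      proof cases
        case 1 then show ?thesis using Cl A1 mt by blast
      next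
        case 2
        have "\<forall>k. meetc (X k) (A k)"
        proof
          fix k show "meetc (X k) (A k)"
          proof (cases "k = j")
            case True
            then show ?thesis using mt[rule_format, of j] 2 p2[OF lom 2(2)] ES[OF 2(1)] by simp
          next
            case False then show ?thesis using mt[rule_format, of k] 2 by simp
          qed
        qed
        then have w: "\<forall>k. withinc (X k) (A k)" using Cl A1(1) ES[OF 2(1)] by blast
        show ?thesis
        proof
          fix k show "withinc (B k) (A k)"
            using w[rule_format, of k] 2 p6[OF lom 2(2)] ES[OF 2(1)] by (cases "k = j") auto
        qed
      qed
    next
      case A2: 2
      from B consider "B \<in> M" "B \<notin> S" | X I' where "X \<in> S" "I' \<in> pcs lo m hi" "B = X(j := I')" using mem by blast
      then show ?thesis
      proof cases
        case 1
        have "\<forall>k. meetc (B k) (E k)"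
        proof
          fix k show "meetc (B k) (E k)"
          proof (cases "k = j")
            case True
            then show ?thesis using mt[rule_format, of j] A2 p3[OF lom A2(2)] ES[OF A2(1)] by simp
          next
            case False then show ?thesis using mt[rule_format, of k] A2 by simp
          qed
        qed
        then have w: "\<forall>k. withinc (B k) (E k)" using Cl 1(1) ES[OF A2(1)] by blast
        have Bj: "B j \<noteq> (lo, hi)" using Scl A2(1) 1 w Qj by metis
        show ?thesis
        proof
          fix k show "withinc (B k) (A k)"
          proof (cases "k = j")
            case False then show ?thesis using w A2(3) by simp
          next
            case True
            have mj: "meetc (B j) I" using mt[rule_format, of j] A2(3) by simp
            have wj: "withinc (B j) (lo, hi)" using w ES[OF A2(1)] by metis
            have wfB: "fst (B j) \<le> snd (B j)" using W 1(1) by blast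
            show ?thesis
            proof (cases "fst (B j) = snd (B j)")
              case True then show ?thesis using meetc_sing mj A2(3) \<open>k = j\<close> by simp
            next
              case False
              then have lt: "fst (B j) < snd (B j)" using wfB by simp
              have "dy G j (B j)" using Dy 1(1) lt by blast
              from dy_half[OF this dyQ lt wj Bj]
              have "2 * snd (B j) \<le> lo + hi \<or> lo + hi \<le> 2 * fst (B j)" by simp
              from p9[OF lom m2 A2(2) lt this wj mj] show ?thesis using A2(3) \<open>k = j\<close> by simp
            qed
          qed
        qed
      next
        case 2
        have "\<forall>k. meetc (X k) (E k)"
        proof
          fix k show "meetc (X k) (E k)"
          proof (cases "k = j")
            case True
            then show ?thesis using ES[OF A2(1)] ES[OF 2(1)] meetQ by simp
          next
            case False then show ?thesis using mt[rule_format, of k] A2 2 by simp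
          qed
        qed
        then have w: "\<forall>k. withinc (X k) (E k)" using Cl ES[OF A2(1)] ES[OF 2(1)] by blast
        show ?thesis
        proof
          fix k show "withinc (B k) (A k)"
          proof (cases "k = j")
            case True
            then show ?thesis using mt[rule_format, of j] A2 2 p7[OF lom A2(2) 2(2)] by simp
          next
            case False then show ?thesis using w A2 2 by simp
          qed
        qed
      qed
    qed
  qed
  have Dy': "\<forall>E\<in>?M'. \<forall>k. fst (E k) < snd (E k) \<longrightarrow> dy G k (E k)"
  proof (intro ballI allI impI)
    fix X k assume X: "X \<in> ?M'" and lt: "fst (X k) < snd (X k)"
    from X consider "X \<in> M" | E I where "E \<in> S" "I \<in> pcs lo m hi" "X = E(j := I)" using mem by blast
    then show "dy G k (X k)"
    proof cases
      case 1 then show ?thesis using Dy lt by blast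
    next
      case 2
      show ?thesis
      proof (cases "k = j")
        case False then show ?thesis using Dy ES[OF 2(1)] lt 2(3) by simp
      next
        case True
        have "I = (lo, m) \<or> I = (m, hi)" using 2(2,3) lt True by (auto simp: pcs_def)
        then show ?thesis using dy_halves[OF dyQ lohi ev2] True 2(3) by (auto simp: m_def)
      qed
    qed
  qed
  show ?thesis unfolding minv_def using W' D' Cov' Cl' Dy' by blast
qed

lemma closed_boxset: "closed {z::real^'a. \<forall>l. A l \<le> z$l \<and> z$l \<le> B l}"
proof -
  have "{z::real^'a. \<forall>l. A l \<le> z$l \<and> z$l \<le> B l} = (\<Inter>l. {z. A l \<le> z$l} \<inter> {z. z$l \<le> B l})" by auto
  moreover have "closed {z::real^'a. a \<le> z$k}" for a k
    by (intro closed_Collect_le continuous_on_const continuous_on_component continuous_on_id)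
  moreover have "closed {z::real^'a. z$k \<le> a}" for a k
    by (intro closed_Collect_le continuous_on_const continuous_on_component continuous_on_id)
  ultimately show ?thesis by (auto intro!: closed_INT closed_Int)
qed

lemma closed_subdiv_D: "closed (subdiv_D N p Q j)"
  unfolding subdiv_D_def by (rule closed_boxset)

lemma mesh_inv:
  assumes "is_mesh N p M"
  shows "\<exists>G. minv N G M"
  using assms
proof (induction rule: is_mesh.induct)
  case (tensor G)
  then show ?case using minv_tp by blast
next
  case (step M Q j)
  then obtain G where inv: "minv N G M" by blast
  define S where "S = {E \<in> M. ent_set E \<subseteq> subdiv_D N p Q j \<and> E j = Q j}"
  have W: "\<forall>E\<in>M. \<forall>k. fst (E k) \<le> snd (E k) \<and> snd (E k) \<le> N k"
    using inv unfolding minv_def by (elim conjE) assumption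
  have Scl: "\<forall>E\<in>S. \<forall>X\<in>M. (\<forall>k. withinc (X k) (E k)) \<longrightarrow> X j = Q j \<longrightarrow> X \<in> S"
  proof (intro ballI impI)
    fix E X assume E: "E \<in> S" and X: "X \<in> M" and w: "\<forall>k. withinc (X k) (E k)" and Xj: "X j = Q j"
    have wfE: "\<forall>k. fst (E k) \<le> snd (E k)" using W E by (auto simp: S_def)
    have "ent_set X \<subseteq> ebox E"
    proof
      fix z assume "z \<in> ent_set X"
      then have "\<forall>k. z$k \<in> ccl (E k)"
        using withinc_sub w W X by (metis ent_set_iff subsetD)
      then show "z \<in> ebox E" by (simp add: ebox_def)
    qed
    also have "\<dots> = closure (ent_set E)" using closure_ent_set[OF wfE] by simp
    also have "\<dots> \<subseteq> subdiv_D N p Q j"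
      using E closed_subdiv_D by (intro closure_minimal) (auto simp: S_def)
    finally show "X \<in> S" using X Xj by (simp add: S_def)
  qed
  have eq: "subdiv N p M Q j = (M - S) \<union> (\<Union>E\<in>S. {E(j := (fst (Q j), (fst (Q j) + snd (Q j)) div 2)),
      E(j := ((fst (Q j) + snd (Q j)) div 2, (fst (Q j) + snd (Q j)) div 2)),
      E(j := ((fst (Q j) + snd (Q j)) div 2, snd (Q j)))})"
    by (simp add: subdiv_def Let_def S_def)
  have "minv N G (subdiv N p M Q j)"
    unfolding eq
    by (rule minv_subdiv_gen[OF inv step.hyps(2,3,5)]) (use Scl in \<open>auto simp: S_def\<close>)
  then show ?case by blast
qed

definition vupd :: "real^'n \<Rightarrow> 'n \<Rightarrow> real \<Rightarrow> real^'n" where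
  "vupd p j v = (\<chi> k. if k = j then v else p$k)"

lemma vupd_nth [simp]: "vupd p j v $ k = (if k = j then v else p$k)"
  by (simp add: vupd_def)

definition bx :: "('n::finite \<Rightarrow> nat) \<Rightarrow> (real^'n) set" where
  "bx N = {z. \<forall>k. 0 \<le> z$k \<and> z$k \<le> real (N k)}"

definition nonnat :: "real \<Rightarrow> bool" where
  "nonnat v \<longleftrightarrow> (\<forall>m::nat. v \<noteq> real m)"

lemma nonnat_half: "nonnat (real c + 1/2)" "nonnat (real c - 1/2)"
proof -
  show "nonnat (real c + 1/2)" unfolding nonnat_def
  proof
    fix m :: nat show "real c + 1/2 \<noteq> real m"
    proof
      assume "real c + 1/2 = real m"
      then have "2 * real c + 1 = 2 * real m" by simp
      then have "2 * c + 1 = 2 * m" by linarith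
      then show False by presburger
    qed
  qed
  show "nonnat (real c - 1/2)" unfolding nonnat_def
  proof
    fix m :: nat show "real c - 1/2 \<noteq> real m"
    proof
      assume "real c - 1/2 = real m"
      then have "2 * real m + 1 = 2 * real c" by simp
      then have "2 * m + 1 = 2 * c" by linarith
      then show False by presburger
    qed
  qed
qed

lemma half_up: "fst x < snd x \<Longrightarrow> fst x \<le> c \<Longrightarrow> c < snd x \<Longrightarrow> real c + 1/2 \<in> comp_set x"
  by (auto simp: comp_set_def)

lemma half_down: "fst x < snd x \<Longrightarrow> fst x < c \<Longrightarrow> c \<le> snd x \<Longrightarrow> real c - 1/2 \<in> comp_set x"
  by (auto simp: comp_set_def)

lemma nonnat_comp: "fst x \<le> snd x \<Longrightarrow> v \<in> ccl x \<Longrightarrow> nonnat v \<Longrightarrow> v \<in> comp_set x \<and> fst x < snd x"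
proof -
  assume a: "fst x \<le> snd x" "v \<in> ccl x" "nonnat v"
  have "v \<noteq> real (fst x)" "v \<noteq> real (snd x)" using a(3) by (auto simp: nonnat_def)
  then show ?thesis using a(1,2) by (auto simp: comp_set_def ccl_def)
qed

lemma nonnat_comp2: "v \<in> comp_set x \<Longrightarrow> nonnat v \<Longrightarrow> fst x < snd x"
  by (cases "fst x = snd x") (auto simp: comp_set_def nonnat_def)

lemma comp_set_ccl: "fst x \<le> snd x \<Longrightarrow> v \<in> comp_set x \<Longrightarrow> v \<in> ccl x"
  by (auto simp: comp_set_def ccl_def split: if_splits)

lemma int_interior: "fst x < snd x \<Longrightarrow> real c \<in> comp_set x \<Longrightarrow> fst x < c \<and> c < snd x"
  by (auto simp: comp_set_def)

lemma sing_comp: "fst x = snd x \<Longrightarrow> v \<in> comp_set x \<Longrightarrow> v = real (fst x)"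
  by (auto simp: comp_set_def)

lemma endpoint_side:
  assumes "fst x < snd x" "c = fst x \<or> c = snd x" "s = 1 \<or> s = -1"
  shows "real c + s/2 \<in> comp_set x \<or> real c - s/2 \<in> comp_set x"
  using assms by (auto simp: comp_set_def)

definition rhok :: "real^'n \<Rightarrow> real \<Rightarrow> bool" where
  "rhok z \<rho> \<longleftrightarrow> 0 < \<rho> \<and> \<rho> \<le> 1 \<and> (\<forall>k. \<forall>m::nat. real m \<noteq> z$k \<longrightarrow> \<rho> \<le> \<bar>real m - z$k\<bar>)"

lemma rhok_nonnat: "rhok z \<rho> \<Longrightarrow> 0 < \<bar>v - z$k\<bar> \<Longrightarrow> \<bar>v - z$k\<bar> < \<rho> \<Longrightarrow> nonnat v"
  unfolding rhok_def nonnat_def by force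

lemma rhok_nat: "rhok z \<rho> \<Longrightarrow> \<bar>real m - z$k\<bar> < \<rho> \<Longrightarrow> real m = z$k"
  unfolding rhok_def by force

lemma rhok_ccl:
  assumes "rhok z \<rho>" "v \<in> comp_set x" "\<bar>v - z$k\<bar> < \<rho>"
  shows "z$k \<in> ccl x"
proof (cases "fst x = snd x")
  case True
  then have "v = real (fst x)" using assms(2) by (simp add: comp_set_def)
  then have "real (fst x) = z$k" using rhok_nat[OF assms(1)] assms(3) by blast
  then show ?thesis using True by (simp add: ccl_def)
next
  case False
  then have v: "real (fst x) < v" "v < real (snd x)" using assms(2) by (auto simp: comp_set_def)
  have "real (fst x) \<le> z$k"
  proof (rule ccontr)
    assume "\<not> real (fst x) \<le> z$k"
    then have "\<bar>real (fst x) - z$k\<bar> < \<rho>" using v assms(3) by linarith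
    then show False using rhok_nat[OF assms(1)] \<open>\<not> real (fst x) \<le> z$k\<close> by fastforce
  qed
  moreover have "z$k \<le> real (snd x)"
  proof (rule ccontr)
    assume "\<not> z$k \<le> real (snd x)"
    then have "\<bar>real (snd x) - z$k\<bar> < \<rho>" using v assms(3) by linarith
    then show False using rhok_nat[OF assms(1)] \<open>\<not> z$k \<le> real (snd x)\<close> by fastforce
  qed
  ultimately show ?thesis by (simp add: ccl_def)
qed

lemma int_sep:
  fixes f :: int
  assumes "int m \<le> f \<or> f + 1 \<le> int m"
  shows "real m \<le> real_of_int f \<or> real_of_int f + 1 \<le> real m"
  using assms
proof (elim disjE)
  assume "int m \<le> f"
  then have "real_of_int (int m) \<le> real_of_int f" by (simp only: of_int_le_iff)
  then show ?thesis by simp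
next
  assume "f + 1 \<le> int m"
  then have "real_of_int (f + 1) \<le> real_of_int (int m)" by (simp only: of_int_le_iff)
  then show ?thesis by simp
qed

lemma rho_exists_1: "\<exists>\<delta>>0. \<delta> \<le> 1 \<and> (\<forall>m::nat. real m \<noteq> v \<longrightarrow> \<delta> \<le> \<bar>real m - v\<bar>)"
proof (cases "v = real_of_int \<lfloor>v\<rfloor>")
  case True
  show ?thesis
  proof (intro exI[of _ 1] conjI allI impI)
    fix m :: nat assume m: "real m \<noteq> v"
    have "int m \<noteq> \<lfloor>v\<rfloor>"
    proof
      assume "int m = \<lfloor>v\<rfloor>"
      then have "real_of_int (int m) = real_of_int \<lfloor>v\<rfloor>" by simp
      then show False using m True by simp
    qed
    then have "int m \<le> \<lfloor>v\<rfloor> - 1 \<or> (\<lfloor>v\<rfloor> - 1) + 1 \<le> int m - 1" by linarith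
    then have "real m \<le> real_of_int (\<lfloor>v\<rfloor> - 1) \<or> real_of_int (\<lfloor>v\<rfloor> - 1) + 1 \<le> real m - 1"
      using int_sep[of m "\<lfloor>v\<rfloor> - 1"] by fastforce
    then have A: "real m \<le> v - 1 \<or> v + 1 \<le> real m" using True by simp linarith
    then show "1 \<le> \<bar>real m - v\<bar>" by (elim disjE) (simp_all add: abs_if)
  qed auto
next
  case False
  have f1: "real_of_int \<lfloor>v\<rfloor> < v" using False of_int_floor_le[of v] by linarith
  have f2: "v < real_of_int \<lfloor>v\<rfloor> + 1" by linarith
  define \<delta> where "\<delta> = min (v - real_of_int \<lfloor>v\<rfloor>) (real_of_int \<lfloor>v\<rfloor> + 1 - v)"
  have d1: "\<delta> \<le> v - real_of_int \<lfloor>v\<rfloor>" "\<delta> \<le> real_of_int \<lfloor>v\<rfloor> + 1 - v" by (simp_all add: \<delta>_def)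
  show ?thesis
  proof (intro exI[of _ \<delta>] conjI allI impI)
    show "0 < \<delta>" using f1 f2 by (simp add: \<delta>_def)
    show "\<delta> \<le> 1" using d1 f1 by linarith
    fix m :: nat
    have "int m \<le> \<lfloor>v\<rfloor> \<or> \<lfloor>v\<rfloor> + 1 \<le> int m" by linarith
    then have "real m \<le> real_of_int \<lfloor>v\<rfloor> \<or> real_of_int \<lfloor>v\<rfloor> + 1 \<le> real m" by (rule int_sep)
    then show "\<delta> \<le> \<bar>real m - v\<bar>" using d1 by (auto simp: abs_if)
  qed
qed

lemma rho_exists: "\<exists>\<rho>. rhok (z::real^'n::finite) \<rho>"
proof -
  have "\<forall>k. \<exists>\<delta>>0. \<delta> \<le> 1 \<and> (\<forall>m::nat. real m \<noteq> z$k \<longrightarrow> \<delta> \<le> \<bar>real m - z$k\<bar>)"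
    using rho_exists_1 by blast
  then obtain \<delta> where d: "\<forall>k. \<delta> k > 0 \<and> \<delta> k \<le> 1 \<and> (\<forall>m::nat. real m \<noteq> z$k \<longrightarrow> \<delta> k \<le> \<bar>real m - z$k\<bar>)"
    by metis
  define \<rho> where "\<rho> = Min (range \<delta>)"
  have "\<rho> \<in> range \<delta>" unfolding \<rho>_def by (intro Min_in) auto
  moreover have "\<rho> \<le> \<delta> k" for k unfolding \<rho>_def by (intro Min_le) auto
  ultimately have "rhok z \<rho>" using d unfolding rhok_def by (metis dual_order.trans rangeE)
  then show ?thesis by blast
qed

locale mctx =
  fixes N :: "'n::finite \<Rightarrow> nat" and G :: "'n \<Rightarrow> nat set" and M :: "'n entity set"
  assumes inv: "minv N G M" and N1: "\<forall>k. N k \<ge> 1"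
begin

lemma invW: "\<forall>E\<in>M. \<forall>k. fst (E k) \<le> snd (E k) \<and> snd (E k) \<le> N k"
  using inv unfolding minv_def by (elim conjE) assumption
lemma invD: "\<forall>E\<in>M. \<forall>E'\<in>M. E \<noteq> E' \<longrightarrow> (\<exists>k. \<not> ovl (E k) (E' k))"
  using inv unfolding minv_def by (elim conjE) assumption
lemma invCov: "\<forall>z::real^'n. (\<forall>k. 0 \<le> z$k \<and> z$k \<le> real (N k)) \<longrightarrow> (\<exists>E\<in>M. z \<in> ent_set E)"
  using inv unfolding minv_def by (elim conjE) assumption
lemma invCl: "\<forall>E\<in>M. \<forall>X\<in>M. (\<forall>k. meetc (X k) (E k)) \<longrightarrow> (\<forall>k. withinc (X k) (E k))"
  using inv unfolding minv_def by (elim conjE) assumption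

lemma W: "E \<in> M \<Longrightarrow> fst (E k) \<le> snd (E k) \<and> snd (E k) \<le> N k"
  using invW by blast

lemma wf: "E \<in> M \<Longrightarrow> \<forall>k. fst (E k) \<le> snd (E k)"
  using W by blast

lemma disj: "E \<in> M \<Longrightarrow> E' \<in> M \<Longrightarrow> v \<in> ent_set E \<Longrightarrow> v \<in> ent_set E' \<Longrightarrow> E = E'"
proof (rule ccontr)
  assume a: "E \<in> M" "E' \<in> M" "v \<in> ent_set E" "v \<in> ent_set E'" "E \<noteq> E'"
  then obtain k where k: "\<not> ovl (E k) (E' k)" using invD by blast
  have "ovl (E k) (E' k)"
    using ovl_of_common[of "E k" "E' k" "v$k"] a W by (auto simp: ent_set_iff)
  then show False using k by simp
qed

lemma cover: "z \<in> bx N \<Longrightarrow> \<exists>E\<in>M. z \<in> ent_set E"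
  using invCov unfolding bx_def by blast

lemma Cl: "E \<in> M \<Longrightarrow> X \<in> M \<Longrightarrow> (\<forall>k. meetc (X k) (E k)) \<Longrightarrow> withinc (X k) (E k)"
  using invCl by blast

lemma Cl_pt: "E \<in> M \<Longrightarrow> X \<in> M \<Longrightarrow> v \<in> ent_set X \<Longrightarrow> v \<in> ebox E \<Longrightarrow> withinc (X k) (E k)"
proof -
  assume a: "E \<in> M" "X \<in> M" "v \<in> ent_set X" "v \<in> ebox E"
  have "\<forall>k. meetc (X k) (E k)"
  proof
    fix k
    have "v$k \<in> comp_set (X k)" "v$k \<in> ccl (E k)" using a(3,4) by (auto simp: ent_set_iff ebox_iff)
    then show "meetc (X k) (E k)" using meetc_of_common[of "X k" "E k" "v$k"] W[OF a(1), of k] W[OF a(2), of k] by blast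
  qed
  then show ?thesis using Cl a by blast
qed

lemma clos: "E \<in> M \<Longrightarrow> closure (ent_set E) = ebox E"
  using closure_ent_set wf by blast

lemma ebox_bx: "E \<in> M \<Longrightarrow> ebox E \<subseteq> bx N"
proof
  fix z assume "E \<in> M" "z \<in> ebox E"
  then have "real (fst (E k)) \<le> z$k \<and> z$k \<le> real (snd (E k)) \<and> snd (E k) \<le> N k" for k
    using W by (auto simp: ebox_def ccl_def)
  then have "0 \<le> z$k \<and> z$k \<le> real (N k)" for k
    by (meson of_nat_0_le_iff of_nat_mono order_trans)
  then show "z \<in> bx N" by (simp add: bx_def)
qed

lemma ent_bx: "E \<in> M \<Longrightarrow> ent_set E \<subseteq> bx N"
  using ebox_bx ent_set_sub_ebox wf by blast

lemma skel_iff: "z \<in> skel M i \<longleftrightarrow> (\<exists>Q\<in>M. is_cell Q \<and> z \<in> ebox Q \<and> (z$i = real (fst (Q i)) \<or> z$i = real (snd (Q i))))"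
  unfolding skel_def using clos by auto

lemma skel_bx: "skel M i \<subseteq> bx N"
  using skel_iff ebox_bx by blast

lemma finM: "finite M"
proof -
  have "M \<subseteq> Pi UNIV (\<lambda>k. {0..N k} \<times> {0..N k})"
  proof
    fix E assume "E \<in> M"
    then have "E k \<in> {0..N k} \<times> {0..N k}" for k using W[of E k] by (cases "E k") auto
    then show "E \<in> Pi UNIV (\<lambda>k. {0..N k} \<times> {0..N k})" by (simp add: Pi_def)
  qed
  moreover have "finite (Pi UNIV (\<lambda>k. {0..N k} \<times> {0..N k}))"
    using finite_PiE[of UNIV "\<lambda>k. {0..N k} \<times> {0..N k}"] by (simp add: PiE_UNIV_domain)
  ultimately show ?thesis by (rule finite_subset)
qed

lemma closed_skel: "closed (skel M i)"
  unfolding skel_def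
proof (rule closed_UN)
  show "finite {Q \<in> M. is_cell Q}" using finM by simp
  show "\<forall>Q\<in>{Q \<in> M. is_cell Q}. closed {z \<in> closure (ent_set Q). z$i \<in> {real (fst (Q i)), real (snd (Q i))}}"
  proof
  fix Q assume "Q \<in> {Q \<in> M. is_cell Q}"
  have eq: "{z \<in> closure (ent_set Q). z$i \<in> {real (fst (Q i)), real (snd (Q i))}}
     = closure (ent_set Q) \<inter> ({z. z$i = real (fst (Q i))} \<union> {z. z$i = real (snd (Q i))})" by blast
  have cl: "closed {z::real^'n. z$i = a}" for a
    by (intro closed_Collect_eq continuous_on_const continuous_on_component continuous_on_id)
  show "closed {z \<in> closure (ent_set Q). z$i \<in> {real (fst (Q i)), real (snd (Q i))}}"
    unfolding eq by (intro closed_Int closed_Un closed_closure cl)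
  qed
qed

lemma gen_cell:
  assumes wbx: "w \<in> bx N" and wS: "w \<notin> skel M i" and gen: "\<forall>k. k \<noteq> i \<longrightarrow> nonnat (w$k)"
    and wi: "w$i = real c"
  shows "\<exists>Q\<in>M. is_cell Q \<and> w \<in> ent_set Q \<and> fst (Q i) < c \<and> c < snd (Q i)"
proof -
  obtain E where E: "E \<in> M" "w \<in> ent_set E" using cover wbx by blast
  have Eint: "fst (E k) < snd (E k)" if "k \<noteq> i" for k
  proof -
    have "w$k \<in> comp_set (E k)" using E(2) by (simp add: ent_set_iff)
    then show ?thesis using nonnat_comp2[of "w$k" "E k"] gen that by blast
  qed
  have wE: "w$k \<in> comp_set (E k)" for k using E(2) by (simp add: ent_set_iff)
  show ?thesis
  proof (cases "fst (E i) < snd (E i)")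
    case True
    have "is_cell E" unfolding is_cell_def
    proof
      fix k show "fst (E k) < snd (E k)" using True Eint by (cases "k = i") auto
    qed
    moreover have "fst (E i) < c \<and> c < snd (E i)"
      using int_interior[OF True] wE[of i] wi by simp
    ultimately show ?thesis using E by blast
  next
    case False
    have "fst (E i) \<le> snd (E i)" using W[OF E(1)] by blast
    then have Ei: "fst (E i) = snd (E i)" using False by simp
    have "w$i \<le> real (N i)" using wbx by (simp add: bx_def)
    then have cN: "c \<le> N i" using wi by simp
    define h :: real where "h = (if c < N i then 1/2 else -1/2)"
    define w' where "w' = vupd w i (real c + h)"
    have w'bx: "w' \<in> bx N"
    proof -
      have "0 \<le> real c + h \<and> real c + h \<le> real (N i)"
      proof (cases "c < N i")
        case True
        then have "real c + 1 \<le> real (N i)" by simp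
        then show ?thesis by (simp add: h_def True)
      next
        case False
        then have "c = N i" using cN by simp
        moreover have "1 \<le> real (N i)" using N1 by simp
        ultimately show ?thesis by (simp add: h_def)
      qed
      then show ?thesis using wbx by (auto simp: bx_def w'_def)
    qed
    obtain G' where G': "G' \<in> M" "w' \<in> ent_set G'" using cover w'bx by blast
    have w'G: "w'$k \<in> comp_set (G' k)" for k using G'(2) by (simp add: ent_set_iff)
    have nn: "nonnat (real c + h)" using nonnat_half by (auto simp: h_def)
    have G'int: "fst (G' k) < snd (G' k)" for k
    proof (cases "k = i")
      case True then show ?thesis using nonnat_comp2[OF w'G[of k]] nn by (simp add: w'_def)
    next
      case False then show ?thesis using nonnat_comp2[OF w'G[of k]] gen by (simp add: w'_def)
    qed
    then have cellG: "is_cell G'" by (simp add: is_cell_def)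
    have hi: "real c + h \<in> comp_set (G' i)" using w'G[of i] by (simp add: w'_def)
    then have gc: "fst (G' i) \<le> c" "c \<le> snd (G' i)"
      using G'int[of i] by (auto simp: comp_set_def h_def split: if_splits)
    have wk: "w$k \<in> comp_set (G' k)" if "k \<noteq> i" for k
      using w'G[of k] that by (simp add: w'_def)
    have wbox: "w \<in> ebox G'"
    proof -
      have "w$k \<in> ccl (G' k)" for k
      proof (cases "k = i")
        case True then show ?thesis using gc wi by (simp add: ccl_def)
      next
        case False then show ?thesis using wk[OF False] W[OF G'(1)] comp_set_ccl by blast
      qed
      then show ?thesis by (simp add: ebox_def)
    qed
    show ?thesis
    proof (cases "fst (G' i) < c \<and> c < snd (G' i)")
      case True
      then have "w$i \<in> comp_set (G' i)" using wi G'int[of i] by (simp add: comp_set_def)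
      then have "\<forall>k. w$k \<in> comp_set (G' k)" using wk by (metis)
      then have "w \<in> ent_set G'" by (simp add: ent_set_iff)
      then have "G' = E" using disj G'(1) E by blast
      then show ?thesis using Ei G'int[of i] by simp
    next
      case False
      then have "c = fst (G' i) \<or> c = snd (G' i)" using gc by linarith
      then have "w$i = real (fst (G' i)) \<or> w$i = real (snd (G' i))" using wi by auto
      then have "w \<in> skel M i" using skel_iff G'(1) cellG wbox by blast
      then show ?thesis using wS by blast
    qed
  qed
qed
end

context mctx begin

lemma card_minus2:
  assumes "i \<noteq> j"
  shows "card (UNIV - {i, j} :: 'n set) = CARD('n) - 2"
  using assms by (simp add: card_Diff_subset)

lemma core:
  fixes z p p' :: "real^'n" and i j :: 'n and c :: nat and \<rho> :: real
  assumes c2: "CARD('n) \<ge> 2"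
    and ij: "i \<noteq> j" and rho: "rhok z \<rho>" and zi: "z$i = real c"
    and pS: "p \<in> skel M i" and p'S: "p' \<notin> skel M i" and p'bx: "p' \<in> bx N"
    and same: "\<forall>k. k \<noteq> j \<longrightarrow> p'$k = p$k" and pi: "p$i = real c"
    and gen: "\<forall>k. k \<noteq> i \<longrightarrow> k \<noteq> j \<longrightarrow> 0 < \<bar>p$k - z$k\<bar> \<and> \<bar>p$k - z$k\<bar> < \<rho>"
    and pj: "\<bar>p$j - z$j\<bar> < \<rho>" and p'j: "0 < \<bar>p'$j - z$j\<bar>" "\<bar>p'$j - z$j\<bar> < \<rho>"
    and d: "p'$j \<noteq> p$j"
  shows "\<exists>T Q. is_tjunction N M T \<and> ascell_data M T = (Q, i, j) \<and> z \<in> closure (ent_set T)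
      \<and> Q \<in> M \<and> is_cell Q \<and> (p$j < p'$j \<longrightarrow> real (fst (Q j)) = z$j)
      \<and> (p'$j < p$j \<longrightarrow> real (snd (Q j)) = z$j)"
proof -
  have nnk: "nonnat (p$k)" if "k \<noteq> i" "k \<noteq> j" for k
    using rhok_nonnat[OF rho] gen that by blast
  have nnj: "nonnat (p'$j)" using rhok_nonnat[OF rho p'j] .
  define good where "good E \<longleftrightarrow> (\<forall>k. k \<noteq> i \<longrightarrow> k \<noteq> j \<longrightarrow> p$k \<in> comp_set (E k))" for E :: "'n entity"
  define pt where "pt a b = (\<chi> k. if k = i then a else if k = j then b else p$k)" for a b :: real
  have pt_nth: "pt a b $ k = (if k = i then a else if k = j then b else p$k)" for a b k
    by (simp add: pt_def)
  have ptmem: "pt a b \<in> ent_set E \<longleftrightarrow> a \<in> comp_set (E i) \<and> b \<in> comp_set (E j)" if "good E" for E a b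
    using that ij unfolding good_def ent_set_iff pt_nth by (metis)
  have ptbox: "pt a b \<in> ebox E \<longleftrightarrow> (\<forall>k. pt a b $ k \<in> ccl (E k))" for E a b by (simp add: ebox_iff)
  have goodI: "good E" if "E \<in> M" "\<forall>k. k \<noteq> i \<longrightarrow> k \<noteq> j \<longrightarrow> p$k \<in> ccl (E k)" for E
    unfolding good_def using nonnat_comp wf that nnk by blast
  have good_int: "fst (E k) < snd (E k)" if "good E" "k \<noteq> i" "k \<noteq> j" for E k
    using that nonnat_comp2 nnk unfolding good_def by blast
  obtain Q' where Q': "Q' \<in> M" "is_cell Q'" "p \<in> ebox Q'" "p$i = real (fst (Q' i)) \<or> p$i = real (snd (Q' i))"
    using pS skel_iff by blast
  have cQ': "c = fst (Q' i) \<or> c = snd (Q' i)" using Q'(4) pi by simp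
  have Q'int: "fst (Q' k) < snd (Q' k)" for k using Q'(2) by (simp add: is_cell_def)
  have goodQ': "good Q'" using goodI Q' by (simp add: ebox_iff)
  have "\<forall>k. k \<noteq> i \<longrightarrow> nonnat (p'$k)"
  proof (intro allI impI)
    fix k assume "k \<noteq> i" then show "nonnat (p'$k)" using nnj nnk same by (cases "k = j") auto
  qed
  moreover have "p'$i = real c" using same ij pi by simp
  ultimately obtain Qs where Qs: "Qs \<in> M" "is_cell Qs" "p' \<in> ent_set Qs" "fst (Qs i) < c" "c < snd (Qs i)"
    using gen_cell[OF p'bx p'S] by blast
  have Qsint: "fst (Qs k) < snd (Qs k)" for k using Qs(2) by (simp add: is_cell_def)
  have p'Qs: "p'$k \<in> comp_set (Qs k)" for k using Qs(3) by (simp add: ent_set_iff)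
  have goodQs: "good Qs" unfolding good_def using p'Qs same by metis
  have Q'Qs: "Q' \<noteq> Qs" using cQ' Qs(4,5) by auto
  then obtain k0 where k0: "\<not> ovl (Q' k0) (Qs k0)" using invD Q'(1) Qs(1) by blast
  have "k0 = j"
  proof (rule ccontr)
    assume "k0 \<noteq> j"
    have "\<exists>v. v \<in> comp_set (Q' k0) \<and> v \<in> comp_set (Qs k0)"
    proof (cases "k0 = i")
      case True
      show ?thesis
      proof (cases "c = fst (Q' i)")
        case True
        then have "real c + 1/2 \<in> comp_set (Q' i)" using half_up[OF Q'int[of i]] Q'int[of i] by simp
        moreover have "real c + 1/2 \<in> comp_set (Qs i)" using half_up[OF Qsint[of i]] Qs(4,5) by simp
        ultimately show ?thesis using \<open>k0 = i\<close> by blast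
      next
        case False
        then have cs: "c = snd (Q' i)" using cQ' by simp
        then have "real c - 1/2 \<in> comp_set (Q' i)" using half_down[OF Q'int[of i]] Q'int[of i] by simp
        moreover have "real c - 1/2 \<in> comp_set (Qs i)" using half_down[OF Qsint[of i]] Qs(4,5) by simp
        ultimately show ?thesis using \<open>k0 = i\<close> by blast
      qed
    next
      case False
      then show ?thesis using goodQ' goodQs \<open>k0 \<noteq> j\<close> unfolding good_def by blast
    qed
    then show False using k0 ovl_of_common wf Q'(1) Qs(1) by blast
  qed
  then have nov: "snd (Qs j) \<le> fst (Q' j) \<or> snd (Q' j) \<le> fst (Qs j)"
    using k0 Q'int[of j] Qsint[of j] by (auto simp: ovl_def)
  have pjQ': "real (fst (Q' j)) \<le> p$j" "p$j \<le> real (snd (Q' j))" using Q'(3) by (auto simp: ebox_iff ccl_def)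
  have p'jQs: "real (fst (Qs j)) < p'$j" "p'$j < real (snd (Qs j))"
    using p'Qs[of j] Qsint[of j] by (auto simp: comp_set_def)
  have between: "real m = z$j" if "min (p$j) (p'$j) \<le> real m" "real m \<le> max (p$j) (p'$j)" for m
  proof -
    have "\<bar>real m - z$j\<bar> < \<rho>" using that pj p'j(2) by (auto simp: abs_if min_def max_def split: if_splits)
    then show ?thesis using rhok_nat[OF rho] by blast
  qed
  define zj where "zj = (if p$j < p'$j then snd (Q' j) else fst (Q' j))"
  define s :: real where "s = (if p$j < p'$j then 1 else -1)"
  have caseA: "snd (Q' j) = zj \<and> fst (Qs j) = zj \<and> real zj = z$j" if "p$j < p'$j"
  proof -
    have le: "snd (Q' j) \<le> fst (Qs j)" using nov pjQ' p'jQs that by linarith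
    have mm: "min (p$j) (p'$j) = p$j" "max (p$j) (p'$j) = p'$j" using that by auto
    have e1: "real (snd (Q' j)) = z$j" using between[of "snd (Q' j)"] mm pjQ' p'jQs le that by simp
    have e2: "real (fst (Qs j)) = z$j" using between[of "fst (Qs j)"] mm pjQ' p'jQs le that by simp
    have "snd (Q' j) = fst (Qs j)" using e1 e2 by simp
    then show ?thesis using that e1 by (simp add: zj_def)
  qed
  have caseB: "fst (Q' j) = zj \<and> snd (Qs j) = zj \<and> real zj = z$j" if "p'$j < p$j"
  proof -
    have le: "snd (Qs j) \<le> fst (Q' j)" using nov pjQ' p'jQs that by linarith
    have mm: "min (p$j) (p'$j) = p'$j" "max (p$j) (p'$j) = p$j" using that by auto
    have e1: "real (fst (Q' j)) = z$j" using between[of "fst (Q' j)"] mm pjQ' p'jQs le that by simp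
    have e2: "real (snd (Qs j)) = z$j" using between[of "snd (Qs j)"] mm pjQ' p'jQs le that by simp
    have "fst (Q' j) = snd (Qs j)" using e1 e2 by simp
    then show ?thesis using that e1 by (simp add: zj_def)
  qed
  have AB: "p$j < p'$j \<or> p'$j < p$j" using d by linarith
  have zjz: "real zj = z$j" using caseA caseB AB by blast
  have sQs: "real zj + s/2 \<in> comp_set (Qs j)"
  proof (cases "p$j < p'$j")
    case True
    then have "fst (Qs j) = zj" using caseA by blast
    then show ?thesis using half_up[OF Qsint[of j], of zj] Qsint[of j] True by (simp add: s_def)
  next
    case False
    then have "p'$j < p$j" using AB by blast
    then have "snd (Qs j) = zj" using caseB by blast
    then show ?thesis using half_down[OF Qsint[of j], of zj] Qsint[of j] False by (simp add: s_def)
  qed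
  have sQ': "real zj - s/2 \<in> comp_set (Q' j)"
  proof (cases "p$j < p'$j")
    case True
    then have "snd (Q' j) = zj" using caseA by blast
    then show ?thesis using half_down[OF Q'int[of j], of zj] Q'int[of j] True by (simp add: s_def)
  next
    case False
    then have "p'$j < p$j" using AB by blast
    then have "fst (Q' j) = zj" using caseB by blast
    then show ?thesis using half_up[OF Q'int[of j], of zj] Q'int[of j] False by (simp add: s_def)
  qed
  have s1: "s = 1 \<or> s = -1" by (simp add: s_def)
  have zjN: "0 < zj" "zj < N j"
  proof -
    have "snd (Qs j) \<le> N j" "snd (Q' j) \<le> N j" using W Qs(1) Q'(1) by blast+
    then show "0 < zj" "zj < N j" using AB caseA caseB Qsint[of j] Q'int[of j] by auto
  qed
  define r where "r = pt (real c) (real zj)"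
  have rQ': "r \<in> ebox Q'"
  proof -
    have "r$k \<in> ccl (Q' k)" for k
    proof -
      consider "k = i" | "k = j" | "k \<noteq> i" "k \<noteq> j" by blast
      then show ?thesis
      proof cases
        case 1
        have "p$i \<in> ccl (Q' i)" using Q'(3) by (simp add: ebox_iff)
        then show ?thesis using 1 pi by (simp add: r_def pt_nth)
      next
        case 2 then show ?thesis using AB caseA caseB Q'int[of j] ij by (auto simp: r_def pt_nth ccl_def)
      next
        case 3 then show ?thesis using Q'(3) by (simp add: r_def pt_nth ebox_iff)
      qed
    qed
    then show ?thesis by (simp add: ebox_iff)
  qed
  have rQs: "r \<in> ebox Qs"
  proof -
    have "r$k \<in> ccl (Qs k)" for k
    proof -
      consider "k = i" | "k = j" | "k \<noteq> i" "k \<noteq> j" by blast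
      then show ?thesis
      proof cases
        case 1 then show ?thesis using Qs(4,5) by (simp add: r_def pt_nth ccl_def)
      next
        case 2 then show ?thesis using AB caseA caseB Qsint[of j] ij by (auto simp: r_def pt_nth ccl_def)
      next
        case 3 then show ?thesis using goodQs comp_set_ccl wf Qs(1) unfolding good_def
          by (simp add: r_def pt_nth)
      qed
    qed
    then show ?thesis by (simp add: ebox_iff)
  qed
  obtain T where T: "T \<in> M" "r \<in> ent_set T" using cover ebox_bx[OF Q'(1)] rQ' by blast
  have rT: "r$k \<in> comp_set (T k)" for k using T(2) by (simp add: ent_set_iff)
  have goodT: "good T" unfolding good_def
  proof (intro allI impI)
    fix k assume "k \<noteq> i" "k \<noteq> j"
    then show "p$k \<in> comp_set (T k)" using rT[of k] by (simp add: r_def pt_nth)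
  qed
  have wT': "withinc (T k) (Q' k)" for k using Cl_pt[OF Q'(1) T rQ'] .
  have wTs: "withinc (T k) (Qs k)" for k using Cl_pt[OF Qs(1) T rQs] .
  have Ti: "fst (T i) = c \<and> snd (T i) = c"
  proof (cases "fst (T i) < snd (T i)")
    case True
    have "fst (T i) < c \<and> c < snd (T i)" using int_interior[OF True] rT[of i] by (simp add: r_def pt_nth)
    then show ?thesis using wT'[of i] cQ' by (auto simp: withinc_def)
  next
    case False
    then have "fst (T i) = snd (T i)" using wf T(1) by (meson le_neq_implies_less)
    moreover have "real c \<in> comp_set (T i)" using rT[of i] by (simp add: r_def pt_nth)
    ultimately have "real c = real (fst (T i))" using sing_comp by blast
    then show ?thesis using \<open>fst (T i) = snd (T i)\<close> by simp
  qed
  have Tj: "fst (T j) = zj \<and> snd (T j) = zj"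
  proof (cases "fst (T j) < snd (T j)")
    case True
    have "fst (T j) < zj \<and> zj < snd (T j)" using int_interior[OF True] rT[of j] ij by (simp add: r_def pt_nth)
    then show ?thesis using wT'[of j] AB caseA caseB by (auto simp: withinc_def)
  next
    case False
    then have "fst (T j) = snd (T j)" using wf T(1) by (meson le_neq_implies_less)
    moreover have "real zj \<in> comp_set (T j)" using rT[of j] ij by (simp add: r_def pt_nth)
    ultimately have "real zj = real (fst (T j))" using sing_comp by blast
    then show ?thesis using \<open>fst (T j) = snd (T j)\<close> by simp
  qed
  have Tk: "fst (T k) < snd (T k)" if "k \<noteq> i" "k \<noteq> j" for k using good_int[OF goodT that] .
  have "fst (T k) < snd (T k) \<longleftrightarrow> k \<in> UNIV - {i, j}" for k using Ti Tj Tk by (cases "k = i"; cases "k = j") auto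
  then have Tint: "{k. fst (T k) < snd (T k)} = UNIV - {i, j}" by auto
  have edimT: "edim T = CARD('n) - 2" unfolding edim_def Tint using card_minus2[OF ij] .
  have Tnc: "\<not> is_cell T"
  proof
    assume "is_cell T" then have "fst (T i) < snd (T i)" by (simp add: is_cell_def)
    then show False using Ti by simp
  qed
  have cQs: "real c \<in> comp_set (Qs i)" using Qs(4,5) Qsint[of i] by (simp add: comp_set_def)
  have rbx: "r \<in> bx N" using ebox_bx[OF Q'(1)] rQ' by blast
  have rOm: "r \<in> Omega N"
  proof -
    have "0 < r$k \<and> r$k < real (N k)" for k
    proof -
      consider "k = i" | "k = j" | "k \<noteq> i" "k \<noteq> j" by blast
      then show ?thesis
      proof cases
        case 1
        have "snd (Qs i) \<le> N i" using W Qs(1) by blast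
        then show ?thesis using 1 Qs(4,5) by (simp add: r_def pt_nth)
      next
        case 2 then show ?thesis using zjN ij by (simp add: r_def pt_nth)
      next
        case 3
        have "0 \<le> r$k" "r$k \<le> real (N k)" using rbx by (auto simp: bx_def)
        moreover have "r$k \<noteq> real 0" "r$k \<noteq> real (N k)" using nnk[OF 3] 3 by (auto simp: r_def pt_nth nonnat_def)
        ultimately show ?thesis by auto
      qed
    qed
    then show ?thesis by (simp add: Omega_def)
  qed
  have notfr: "\<not> ent_set T \<subseteq> frontier (Omega N)"
  proof
    assume "ent_set T \<subseteq> frontier (Omega N)"
    then have "r \<in> frontier (Omega N)" using T(2) by blast
    then show False using rOm interior_open[OF open_Omega[OF N1]] by (simp add: frontier_def)
  qed
  define Fs where "Fs = {F \<in> M. edim F = CARD('n) - 1 \<and> ent_set T \<subseteq> rel_frontier (ent_set F)}"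
  define cls where "cls F = (if fst (F i) = snd (F i) then 0 else if fst (F i) = c then 1 else (2::nat))" for F :: "'n entity"
  define ptc where "ptc n = (if n = 0 then pt (real c) (real zj - s/2) else if n = 1 then pt (real c + 1/2) (real zj)
      else pt (real c - 1/2) (real zj))" for n :: nat
  have rpt: "r = pt (real c) (real zj)" by (simp add: r_def)
  have goodR: "good E" if "E \<in> M" "r \<in> ebox E" for E
  proof (rule goodI[OF that(1)], intro allI impI)
    fix k assume k: "k \<noteq> i" "k \<noteq> j"
    have "r$k \<in> ccl (E k)" using that(2) by (simp add: ebox_iff)
    moreover have "r$k = p$k" using k by (simp add: r_def pt_nth)
    ultimately show "p$k \<in> ccl (E k)" by simp
  qed
  have Fprop: "ptc (cls F) \<in> ent_set F \<and> F \<in> M" if "F \<in> Fs" for F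
  proof -
    have FM: "F \<in> M" and eF: "edim F = CARD('n) - 1" and sub: "ent_set T \<subseteq> rel_frontier (ent_set F)"
      using that by (auto simp: Fs_def)
    have "r \<in> closure (ent_set F)" using sub T(2) unfolding rel_frontier_def by blast
    then have rF: "r \<in> ebox F" using clos[OF FM] by simp
    have "F \<noteq> T" using eF edimT c2 by auto
    then have rnF: "r \<notin> ent_set F" using disj[OF FM T(1) _ T(2)] by blast
    have goodF: "good F" using goodR[OF FM rF] .
    have wfF: "fst (F k) \<le> snd (F k)" for k using wf FM by blast
    have "r$i \<in> ccl (F i)" "r$j \<in> ccl (F j)" using rF by (simp_all add: ebox_iff)
    then have rFi: "real c \<in> ccl (F i)" and rFj: "real zj \<in> ccl (F j)"
      using ij by (simp_all add: r_def pt_nth)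
    have Fk: "fst (F k) < snd (F k)" if "k \<noteq> i" "k \<noteq> j" for k using good_int[OF goodF that] .
    have notboth: "\<not> (fst (F i) < snd (F i) \<and> fst (F j) < snd (F j))"
    proof
      assume as: "fst (F i) < snd (F i) \<and> fst (F j) < snd (F j)"
      have "fst (F k) < snd (F k)" for k using Fk as by (cases "k = i"; cases "k = j") auto
      then have "{k. fst (F k) < snd (F k)} = UNIV" by auto
      then have "edim F = CARD('n)" by (simp add: edim_def)
      then show False using eF c2 by simp
    qed
    have notnone: "\<not> (fst (F i) = snd (F i) \<and> fst (F j) = snd (F j))"
    proof
      assume as: "fst (F i) = snd (F i) \<and> fst (F j) = snd (F j)"
      have "fst (F k) < snd (F k) \<longleftrightarrow> k \<in> UNIV - {i, j}" for k using Fk as by (cases "k = i"; cases "k = j") auto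
      then have "{k. fst (F k) < snd (F k)} = UNIV - {i, j}" by auto
      then have "edim F = CARD('n) - 2" using card_minus2[OF ij] by (simp add: edim_def)
      then show False using eF c2 by simp
    qed
    show ?thesis
    proof (cases "fst (F i) = snd (F i)")
      case True
      then have Fj: "fst (F j) < snd (F j)" using notnone wfF[of j] by (meson le_neq_implies_less)
      have Fi: "fst (F i) = c" using True rFi by (simp add: ccl_def)
      have cF: "real c \<in> comp_set (F i)" using True Fi by (simp add: comp_set_def)
      have zjF: "fst (F j) \<le> zj" "zj \<le> snd (F j)" using rFj by (auto simp: ccl_def)
      have "\<not> (fst (F j) < zj \<and> zj < snd (F j))"
      proof
        assume "fst (F j) < zj \<and> zj < snd (F j)"
        then have "real zj \<in> comp_set (F j)" using Fj by (simp add: comp_set_def)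
        then have "r \<in> ent_set F" using ptmem[OF goodF] cF rpt by simp
        then show False using rnF by simp
      qed
      then have "zj = fst (F j) \<or> zj = snd (F j)" using zjF by linarith
      from endpoint_side[OF Fj this s1]
      have "real zj + s/2 \<in> comp_set (F j) \<or> real zj - s/2 \<in> comp_set (F j)" .
      moreover have "real zj + s/2 \<notin> comp_set (F j)"
      proof
        assume "real zj + s/2 \<in> comp_set (F j)"
        then have "pt (real c) (real zj + s/2) \<in> ent_set F" using ptmem[OF goodF] cF by simp
        moreover have "pt (real c) (real zj + s/2) \<in> ent_set Qs" using ptmem[OF goodQs] cQs sQs by simp
        ultimately have "F = Qs" using disj FM Qs(1) by blast
        then show False using True Qsint[of i] by simp
      qed
      ultimately have "real zj - s/2 \<in> comp_set (F j)" by blast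
      then have "pt (real c) (real zj - s/2) \<in> ent_set F" using ptmem[OF goodF] cF by simp
      then show ?thesis using True FM by (simp add: cls_def ptc_def)
    next
      case False
      then have Fi: "fst (F i) < snd (F i)" using wfF[of i] by (meson le_neq_implies_less)
      then have Fjs: "fst (F j) = snd (F j)" using notboth wfF[of j] by (meson le_neq_implies_less)
      then have "fst (F j) = zj" using rFj by (simp add: ccl_def)
      then have zjF: "real zj \<in> comp_set (F j)" using Fjs by (simp add: comp_set_def)
      have ciF: "fst (F i) \<le> c" "c \<le> snd (F i)" using rFi by (auto simp: ccl_def)
      have "\<not> (fst (F i) < c \<and> c < snd (F i))"
      proof
        assume "fst (F i) < c \<and> c < snd (F i)"
        then have "real c \<in> comp_set (F i)" using Fi by (simp add: comp_set_def)
        then have "r \<in> ent_set F" using ptmem[OF goodF] zjF rpt by simp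
        then show False using rnF by simp
      qed
      then have ce: "c = fst (F i) \<or> c = snd (F i)" using ciF by linarith
      show ?thesis
      proof (cases "fst (F i) = c")
        case True
        then have "real c + 1/2 \<in> comp_set (F i)" using half_up[OF Fi, of c] Fi by simp
        then have "pt (real c + 1/2) (real zj) \<in> ent_set F" using ptmem[OF goodF] zjF by simp
        then show ?thesis using True False FM by (simp add: cls_def ptc_def)
      next
        case False2: False
        then have "snd (F i) = c" "fst (F i) < c" using ce ciF by auto
        then have "real c - 1/2 \<in> comp_set (F i)" using half_down[OF Fi, of c] by simp
        then have "pt (real c - 1/2) (real zj) \<in> ent_set F" using ptmem[OF goodF] zjF by simp
        then show ?thesis using False False2 FM by (simp add: cls_def ptc_def)
      qed
    qed
  qed
  have inj: "inj_on cls Fs"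
  proof (rule inj_onI)
    fix F1 F2 assume "F1 \<in> Fs" "F2 \<in> Fs" "cls F1 = cls F2"
    then show "F1 = F2" using Fprop[of F1] Fprop[of F2] disj by metis
  qed
  have "cls ` Fs \<subseteq> {0, 1, 2}" by (auto simp: cls_def)
  then have "card (cls ` Fs) \<le> card {0, 1, 2::nat}" by (intro card_mono) auto
  then have cardFs: "card Fs < 4" using card_image[OF inj] by simp
  have tj: "is_tjunction N M T"
    unfolding is_tjunction_def using T(1) edimT notfr cardFs by (simp add: Fs_def)
  have frQs: "ent_set T \<subseteq> frontier (ent_set Qs)"
  proof
    fix v assume v: "v \<in> ent_set T"
    have "v \<in> ebox Qs"
    proof -
      have "v$k \<in> ccl (Qs k)" for k
        using withinc_sub[OF wTs[of k]] wf[OF T(1)] v by (auto simp: ent_set_iff)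
      then show ?thesis by (simp add: ebox_iff)
    qed
    moreover have "v \<notin> ent_set Qs"
    proof
      assume "v \<in> ent_set Qs"
      then have "T = Qs" using disj[OF T(1) Qs(1) v] by simp
      then show False using Tnc Qs(2) by simp
    qed
    ultimately show "v \<in> frontier (ent_set Qs)"
      using clos[OF Qs(1)] interior_open[OF open_ent_set_cell[OF Qs(2)]] by (simp add: frontier_def)
  qed
  have zjQs: "real zj \<in> {real (fst (Qs j)), real (snd (Qs j))}" using AB caseA caseB by auto
  have acQs: "assoc_cell M T Qs i j"
    unfolding assoc_cell_def using Qs(1,2) ij Ti Tj frQs cQs zjQs by simp
  have uniq: "(Q2, i2, j2) = (Qs, i, j)" if a: "assoc_cell M T Q2 i2 j2" for Q2 i2 j2
  proof -
    have Q2: "Q2 \<in> M" "is_cell Q2" "i2 \<noteq> j2" "fst (T i2) = snd (T i2)" "fst (T j2) = snd (T j2)"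
      "ent_set T \<subseteq> frontier (ent_set Q2)" "real (fst (T i2)) \<in> comp_set (Q2 i2)"
      "real (fst (T j2)) \<in> {real (fst (Q2 j2)), real (snd (Q2 j2))}"
      using a by (auto simp: assoc_cell_def)
    have Q2int: "fst (Q2 k) < snd (Q2 k)" for k using Q2(2) by (simp add: is_cell_def)
    have i2: "i2 = i \<or> i2 = j" using Q2(4) Tk by (metis less_irrefl)
    have j2: "j2 = i \<or> j2 = j" using Q2(5) Tk by (metis less_irrefl)
    have "r \<in> closure (ent_set Q2)" using Q2(6) T(2) unfolding frontier_def by blast
    then have rQ2: "r \<in> ebox Q2" using clos[OF Q2(1)] by simp
    have goodQ2: "good Q2" using goodR[OF Q2(1) rQ2] .
    consider "i2 = i" "j2 = j" | "i2 = j" "j2 = i" using i2 j2 Q2(3) by blast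
    then show ?thesis
    proof cases
      case 1
      have cQ2: "real c \<in> comp_set (Q2 i)" using Q2(7) 1 Ti by simp
      have zje: "zj = fst (Q2 j) \<or> zj = snd (Q2 j)" using Q2(8) 1 Tj by auto
      from endpoint_side[OF Q2int[of j] zje s1]
      consider "real zj + s/2 \<in> comp_set (Q2 j)" | "real zj - s/2 \<in> comp_set (Q2 j)" by blast
      then show ?thesis
      proof cases
        case 1
        have "pt (real c) (real zj + s/2) \<in> ent_set Q2" using ptmem[OF goodQ2] cQ2 1 by simp
        moreover have "pt (real c) (real zj + s/2) \<in> ent_set Qs" using ptmem[OF goodQs] cQs sQs by simp
        ultimately have "Q2 = Qs" using disj Q2(1) Qs(1) by blast
        then show ?thesis using \<open>i2 = i\<close> \<open>j2 = j\<close> by simp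
      next
        case 2
        define a where "a = (if c = fst (Q' i) then real c + 1/2 else real c - 1/2)"
        have aQ': "a \<in> comp_set (Q' i)"
          using cQ' half_up[OF Q'int[of i], of c] half_down[OF Q'int[of i], of c] Q'int[of i]
          by (auto simp: a_def)
        have ci: "fst (Q2 i) < c" "c < snd (Q2 i)" using int_interior[OF Q2int[of i] cQ2] by auto
        have aQ2: "a \<in> comp_set (Q2 i)"
          using half_up[OF Q2int[of i], of c] half_down[OF Q2int[of i], of c] ci by (auto simp: a_def)
        have "pt a (real zj - s/2) \<in> ent_set Q2" using ptmem[OF goodQ2] aQ2 2 by simp
        moreover have "pt a (real zj - s/2) \<in> ent_set Q'" using ptmem[OF goodQ'] aQ' sQ' by simp
        ultimately have "Q2 = Q'" using disj Q2(1) Q'(1) by blast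
        then show ?thesis using ci cQ' by auto
      qed
    next
      case 2
      have zjQ2: "real zj \<in> comp_set (Q2 j)" using Q2(7) 2 Tj by simp
      have zji: "fst (Q2 j) < zj" "zj < snd (Q2 j)" using int_interior[OF Q2int[of j] zjQ2] by auto
      have ce: "c = fst (Q2 i) \<or> c = snd (Q2 i)" using Q2(8) 2 Ti by auto
      define b where "b = (if c = fst (Q2 i) then real c + 1/2 else real c - 1/2)"
      have bQ2: "b \<in> comp_set (Q2 i)"
        using ce half_up[OF Q2int[of i], of c] half_down[OF Q2int[of i], of c] Q2int[of i]
        by (auto simp: b_def)
      have bQs: "b \<in> comp_set (Qs i)"
        using half_up[OF Qsint[of i], of c] half_down[OF Qsint[of i], of c] Qs(4,5) by (auto simp: b_def)
      have sQ2: "real zj + s/2 \<in> comp_set (Q2 j)"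
        using half_up[OF Q2int[of j], of zj] half_down[OF Q2int[of j], of zj] zji s1 by auto
      have "pt b (real zj + s/2) \<in> ent_set Q2" using ptmem[OF goodQ2] bQ2 sQ2 by simp
      moreover have "pt b (real zj + s/2) \<in> ent_set Qs" using ptmem[OF goodQs] bQs sQs by simp
      ultimately have "Q2 = Qs" using disj Q2(1) Qs(1) by blast
      then show ?thesis using ce Qs(4,5) by auto
    qed
  qed
  have asc: "ascell_data M T = (Qs, i, j)"
    unfolding ascell_data_def
  proof (rule the_equality)
    show "assoc_cell M T (fst (Qs, i, j)) (fst (snd (Qs, i, j))) (snd (snd (Qs, i, j)))" using acQs by simp
    fix x assume "assoc_cell M T (fst x) (fst (snd x)) (snd (snd x))"
    then have "(fst x, fst (snd x), snd (snd x)) = (Qs, i, j)" by (rule uniq)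
    then show "x = (Qs, i, j)" by simp
  qed
  have zT: "z \<in> closure (ent_set T)"
  proof -
    have "z$k \<in> ccl (T k)" for k
    proof -
      consider "k = i" | "k = j" | "k \<noteq> i" "k \<noteq> j" by blast
      then show ?thesis
      proof cases
        case 1 then show ?thesis using Ti zi by (simp add: ccl_def)
      next
        case 2 then show ?thesis using Tj zjz by (simp add: ccl_def)
      next
        case 3
        have "p$k \<in> comp_set (T k)" using goodT 3 by (simp add: good_def)
        then show ?thesis using rhok_ccl[OF rho] gen 3 by blast
      qed
    qed
    then show ?thesis using clos[OF T(1)] by (simp add: ebox_iff)
  qed
  have fin1: "p$j < p'$j \<longrightarrow> real (fst (Qs j)) = z$j" using caseA by auto
  have fin2: "p'$j < p$j \<longrightarrow> real (snd (Qs j)) = z$j" using caseB by auto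
  show ?thesis using tj asc zT Qs(1,2) fin1 fin2 by blast
qed

end

context mctx begin

lemma stair:
  fixes z e :: "real^'n" and i :: 'n and c :: nat and \<rho> :: real
  assumes c2: "CARD('n) \<ge> 2" and rho: "rhok z \<rho>" and zi: "z$i = real c" and ei: "e$i = 0"
    and fin: "finite A"
  shows "\<forall>p p'. A \<subseteq> {k. e$k \<noteq> 0} \<longrightarrow> p \<in> skel M i \<longrightarrow> p' \<notin> skel M i \<longrightarrow> p' \<in> bx N
    \<longrightarrow> (\<forall>k. k \<notin> A \<longrightarrow> p'$k = p$k) \<longrightarrow> p$i = real c
    \<longrightarrow> (\<forall>k. k \<noteq> i \<longrightarrow> 0 < \<bar>p$k - z$k\<bar> \<and> \<bar>p$k - z$k\<bar> < \<rho> \<and> 0 < \<bar>p'$k - z$k\<bar> \<and> \<bar>p'$k - z$k\<bar> < \<rho>)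
    \<longrightarrow> (\<forall>k\<in>A. 0 < (p'$k - p$k) * e$k)
    \<longrightarrow> (\<exists>T Q j. is_tjunction N M T \<and> ascell_data M T = (Q, i, j) \<and> z \<in> closure (ent_set T)
          \<and> Q \<in> M \<and> is_cell Q \<and> e$j \<noteq> 0 \<and> (0 < e$j \<longrightarrow> real (fst (Q j)) = z$j)
          \<and> (e$j < 0 \<longrightarrow> real (snd (Q j)) = z$j))"
  using fin
proof (induction A rule: finite_induct)
  case empty
  show ?case
  proof (intro allI impI)
    fix p p' :: "real^'n"
    assume "p \<in> skel M i" "p' \<notin> skel M i" "\<forall>k. k \<notin> {} \<longrightarrow> p'$k = p$k"
    then have "p' = p" by (simp add: vec_eq_iff)
    then show "\<exists>T Q j. is_tjunction N M T \<and> ascell_data M T = (Q, i, j) \<and> z \<in> closure (ent_set T)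
          \<and> Q \<in> M \<and> is_cell Q \<and> e$j \<noteq> 0 \<and> (0 < e$j \<longrightarrow> real (fst (Q j)) = z$j)
          \<and> (e$j < 0 \<longrightarrow> real (snd (Q j)) = z$j)" using \<open>p \<in> skel M i\<close> \<open>p' \<notin> skel M i\<close> by simp
  qed
next
  case (insert j A)
  show ?case
  proof (intro allI impI)
    fix p p' :: "real^'n"
    assume sub: "insert j A \<subseteq> {k. e$k \<noteq> 0}" and pS: "p \<in> skel M i" and p'S: "p' \<notin> skel M i"
      and p'bx: "p' \<in> bx N" and same: "\<forall>k. k \<notin> insert j A \<longrightarrow> p'$k = p$k" and pi: "p$i = real c"
      and gen: "\<forall>k. k \<noteq> i \<longrightarrow> 0 < \<bar>p$k - z$k\<bar> \<and> \<bar>p$k - z$k\<bar> < \<rho> \<and> 0 < \<bar>p'$k - z$k\<bar> \<and> \<bar>p'$k - z$k\<bar> < \<rho>"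
      and sg: "\<forall>k\<in>insert j A. 0 < (p'$k - p$k) * e$k"
    have ej: "e$j \<noteq> 0" using sub by auto
    have ij: "i \<noteq> j" using ej ei by auto
    define p'' where "p'' = vupd p j (p'$j)"
    have pbx: "p \<in> bx N" using pS skel_bx by blast
    show "\<exists>T Q j. is_tjunction N M T \<and> ascell_data M T = (Q, i, j) \<and> z \<in> closure (ent_set T)
          \<and> Q \<in> M \<and> is_cell Q \<and> e$j \<noteq> 0 \<and> (0 < e$j \<longrightarrow> real (fst (Q j)) = z$j)
          \<and> (e$j < 0 \<longrightarrow> real (snd (Q j)) = z$j)"
    proof (cases "p'' \<in> skel M i")
      case True
      have "A \<subseteq> {k. e$k \<noteq> 0}" using sub by auto
      moreover have "\<forall>k. k \<notin> A \<longrightarrow> p'$k = p''$k" using same by (auto simp: p''_def)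
      moreover have "p''$i = real c" using pi ij by (simp add: p''_def)
      moreover have "\<forall>k. k \<noteq> i \<longrightarrow> 0 < \<bar>p''$k - z$k\<bar> \<and> \<bar>p''$k - z$k\<bar> < \<rho> \<and> 0 < \<bar>p'$k - z$k\<bar> \<and> \<bar>p'$k - z$k\<bar> < \<rho>"
        using gen by (simp add: p''_def)
      moreover have "\<forall>k\<in>A. 0 < (p'$k - p''$k) * e$k" using sg insert.hyps(2) by (auto simp: p''_def)
      ultimately show ?thesis using insert.IH True p'S p'bx by blast
    next
      case False
      have p''bx: "p'' \<in> bx N" using pbx p'bx by (auto simp: bx_def p''_def)
      have same'': "\<forall>k. k \<noteq> j \<longrightarrow> p''$k = p$k" by (simp add: p''_def)
      have gen'': "\<forall>k. k \<noteq> i \<longrightarrow> k \<noteq> j \<longrightarrow> 0 < \<bar>p$k - z$k\<bar> \<and> \<bar>p$k - z$k\<bar> < \<rho>" using gen by blast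
      have gj: "0 < \<bar>p$j - z$j\<bar> \<and> \<bar>p$j - z$j\<bar> < \<rho> \<and> 0 < \<bar>p'$j - z$j\<bar> \<and> \<bar>p'$j - z$j\<bar> < \<rho>"
        using gen ij by auto
      have pj: "\<bar>p$j - z$j\<bar> < \<rho>" using gj by blast
      have p''j: "0 < \<bar>p''$j - z$j\<bar>" "\<bar>p''$j - z$j\<bar> < \<rho>" using gj by (auto simp: p''_def)
      have sgj: "0 < (p'$j - p$j) * e$j" using sg by blast
      then have d: "p''$j \<noteq> p$j" by (auto simp: p''_def)
      from core[OF c2 ij rho zi pS False p''bx same'' pi gen'' pj p''j d]
      obtain T Q where TQ: "is_tjunction N M T" "ascell_data M T = (Q, i, j)" "z \<in> closure (ent_set T)"
        "Q \<in> M" "is_cell Q" "p$j < p''$j \<longrightarrow> real (fst (Q j)) = z$j" "p''$j < p$j \<longrightarrow> real (snd (Q j)) = z$j"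
        by blast
      have "0 < e$j \<longrightarrow> real (fst (Q j)) = z$j"
      proof
        assume "0 < e$j"
        then have "p$j < p''$j" using sgj by (simp add: p''_def zero_less_mult_iff)
        then show "real (fst (Q j)) = z$j" using TQ(6) by blast
      qed
      moreover have "e$j < 0 \<longrightarrow> real (snd (Q j)) = z$j"
      proof
        assume "e$j < 0"
        then have "p''$j < p$j" using sgj by (simp add: p''_def zero_less_mult_iff)
        then show "real (snd (Q j)) = z$j" using TQ(7) by blast
      qed
      ultimately show ?thesis using TQ ej by blast
    qed
  qed
qed

end

theorem lemma2p3:
  fixes N p :: "'n::finite \<Rightarrow> nat" and M :: "'n entity set"
    and x y :: "real^'n" and i :: 'n
  assumes "CARD('n) \<ge> 2"
    and "\<forall>k. N k \<ge> 1" and "\<forall>k. p k \<ge> 1"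
    and "is_mesh N p M"
    and "x \<in> closure (Omega N)" and "y \<in> closure (Omega N)"
    and "x$i = y$i" and "x \<in> skel M i" and "y \<notin> skel M i"
  shows "\<exists>T. is_tjunction N M T \<and> odir M T = i \<and>
    (let Q = ascell M T; j = pdir M T in
       closure (ent_set T) \<inter> convex hull {x, y} \<noteq> {} \<and> x$j \<noteq> y$j \<and>
       comp_set (Q j) \<inter> convex hull {x$j, y$j} \<noteq> {})"
proof -
  note c2 = assms(1) and N1 = assms(2) and xS = assms(8) and yS = assms(9)
  obtain G where inv: "minv N G M" using mesh_inv[OF assms(4)] by blast
  interpret mctx N G M using inv N1 by unfold_locales
  have clO: "closure (Omega N) = bx N" using closure_Omega[OF N1] by (simp add: bx_def)
  have xbx: "x \<in> bx N" and ybx: "y \<in> bx N" using assms(5,6) clO by auto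
  define e where "e = y - x"
  have ei: "e$i = 0" using assms(7) by (simp add: e_def)
  define f where "f t = x + t *\<^sub>R e" for t :: real
  have fcont: "continuous (at t) f" for t unfolding f_def by (intro continuous_intros)
  define S where "S = {0..1} \<inter> f -` skel M i"
  have "closed (f -` skel M i)" using continuous_closed_vimage[OF closed_skel fcont] by blast
  then have cS: "compact S" unfolding S_def by (intro compact_Int_closed) auto
  have "0 \<in> S" using xS by (simp add: S_def f_def)
  then obtain ts where ts: "ts \<in> S" "\<forall>t\<in>S. t \<le> ts" using compact_attains_sup[OF cS] by blast
  have ts01: "0 \<le> ts" "ts \<le> 1" using ts(1) by (auto simp: S_def)
  define z where "z = f ts"
  have zS: "z \<in> skel M i" using ts(1) by (simp add: S_def z_def)
  have ts1: "ts < 1"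
  proof (rule ccontr)
    assume "\<not> ts < 1" then have "ts = 1" using ts01 by simp
    then have "z = y" by (simp add: z_def f_def e_def)
    then show False using zS yS by simp
  qed
  have zk: "z$k = x$k + ts * e$k" for k by (simp add: z_def f_def)
  have zi: "z$i = x$i" using zk ei by simp
  obtain Q0 where Q0: "Q0 \<in> M" "is_cell Q0" "z \<in> ebox Q0" "z$i = real (fst (Q0 i)) \<or> z$i = real (snd (Q0 i))"
    using zS skel_iff by blast
  obtain c :: nat where c: "z$i = real c" using Q0(4) by blast
  obtain \<rho> where rho: "rhok z \<rho>" using rho_exists by blast
  have rho0: "0 < \<rho>" "\<rho> \<le> 1" using rho by (auto simp: rhok_def)
  define s where "s = min ((1 - ts) / 2) (\<rho> / (2 * (norm e + 1)))"
  have s0: "0 < s" using ts1 rho0 by (simp add: s_def add_nonneg_pos)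
  have "s \<le> (1 - ts) / 2" unfolding s_def by (rule min.cobounded1)
  then have s1: "ts + s \<le> 1" using ts1 by (simp add: field_simps)
  have se: "s * \<bar>e$k\<bar> < \<rho>" for k
  proof -
    have "s * \<bar>e$k\<bar> \<le> (\<rho> / (2 * (norm e + 1))) * norm e"
      using s0 component_le_norm_cart[of e k] rho0
      by (intro mult_mono) (auto simp: s_def)
    also have "\<dots> < \<rho>"
    proof -
      have h0: "0 < 2 * (norm e + 1)" using norm_ge_zero[of e] by (simp add: add_nonneg_pos)
      have "norm e < 2 * (norm e + 1)" using norm_ge_zero[of e] by (simp add: add_nonneg_pos)
      then have "norm e / (2 * (norm e + 1)) < 1" using divide_less_eq_1_pos[OF h0] by simp
      then have "\<rho> * (norm e / (2 * (norm e + 1))) < \<rho> * 1" using rho0 by (intro mult_strict_left_mono) auto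
      then show ?thesis by simp
    qed
    finally show ?thesis .
  qed
  define q where "q = f (ts + s)"
  have qk: "q$k = z$k + s * e$k" for k by (simp add: q_def f_def zk algebra_simps)
  have qS: "q \<notin> skel M i"
  proof
    assume "q \<in> skel M i"
    then have "ts + s \<in> S" using ts01 s0 s1 by (simp add: S_def q_def)
    then show False using ts(2) s0 by fastforce
  qed
  obtain \<beta> where beta: "\<beta> > 0" "ball q \<beta> \<subseteq> - skel M i"
    using closed_skel qS by (metis ComplI open_Compl open_contains_ball)
  define J where "J = {k. e$k \<noteq> 0}"
  have finJ: "finite J" by simp
  define \<mu> where "\<mu> = Min (insert \<rho> ((\<lambda>k. s * \<bar>e$k\<bar>) ` J))"
  have mu0: "0 < \<mu>" unfolding \<mu>_def using rho0 s0 by (auto simp: J_def)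
  have mu1: "\<mu> \<le> s * \<bar>e$k\<bar>" if "k \<in> J" for k unfolding \<mu>_def
    by (rule Min_le) (use that finJ in auto)
  have mur: "\<mu> \<le> \<rho>" unfolding \<mu>_def by auto
  define \<tau> where "\<tau> = min (\<mu> / 2) (\<beta> / (2 * real CARD('n)))"
  have tau0: "0 < \<tau>" using mu0 beta(1) by (simp add: \<tau>_def)
  have taur: "\<tau> < \<rho>" using mur mu0 by (simp add: \<tau>_def)
  have taue: "\<tau> < s * \<bar>e$k\<bar>" if "k \<in> J" for k using mu1[OF that] mu0 by (simp add: \<tau>_def)
  have taub: "real CARD('n) * \<tau> < \<beta>"
  proof -
    have "real CARD('n) * \<tau> \<le> real CARD('n) * (\<beta> / (2 * real CARD('n)))"
      by (intro mult_left_mono) (auto simp: \<tau>_def)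
    also have "\<dots> = \<beta> / 2" by simp
    also have "\<dots> < \<beta>" using beta(1) by simp
    finally show ?thesis .
  qed
  define dir where "dir k = (if z$k < real (snd (Q0 k)) then 1 else -1 :: real)" for k
  have Q0int: "fst (Q0 k) < snd (Q0 k)" for k using Q0(2) by (simp add: is_cell_def)
  have zQ0: "real (fst (Q0 k)) \<le> z$k" "z$k \<le> real (snd (Q0 k))" for k using Q0(3) by (auto simp: ebox_iff ccl_def)
  have zdir: "z$k + \<tau> * dir k \<in> ccl (Q0 k)" for k
  proof (cases "z$k < real (snd (Q0 k))")
    case True
    then have "\<rho> \<le> \<bar>real (snd (Q0 k)) - z$k\<bar>" using rho unfolding rhok_def by (metis less_irrefl)
    then show ?thesis using True zQ0[of k] taur tau0 by (auto simp: dir_def ccl_def)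
  next
    case False
    then have eq: "z$k = real (snd (Q0 k))" using zQ0[of k] by simp
    then have "real (fst (Q0 k)) \<noteq> z$k" using Q0int[of k] by simp
    then have "\<rho> \<le> \<bar>real (fst (Q0 k)) - z$k\<bar>" using rho unfolding rhok_def by blast
    then show ?thesis using False zQ0[of k] taur tau0 by (auto simp: dir_def ccl_def)
  qed
  have adir: "\<bar>\<tau> * dir k\<bar> = \<tau>" for k using tau0 by (simp add: dir_def)
  define pp where "pp = (\<chi> k. if k = i then z$k else z$k + \<tau> * dir k)"
  define pp' where "pp' = (\<chi> k. if k = i then z$k else if e$k = 0 then z$k + \<tau> * dir k else q$k)"
  have ppS: "pp \<in> skel M i"
  proof -
    have "pp$k \<in> ccl (Q0 k)" for k using zdir zQ0 by (auto simp: pp_def ccl_def)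
    then have "pp \<in> ebox Q0" by (simp add: ebox_iff)
    moreover have "pp$i = z$i" by (simp add: pp_def)
    ultimately show ?thesis using skel_iff Q0 by auto
  qed
  have pp'S: "pp' \<notin> skel M i"
  proof -
    have "\<bar>(q - pp')$k\<bar> \<le> \<tau>" for k
      using qk[of k] ei adir[of k] tau0 by (auto simp: pp'_def)
    then have "sum (\<lambda>k. \<bar>(q - pp')$k\<bar>) UNIV \<le> real CARD('n) * \<tau>"
      using sum_bounded_above[of UNIV "\<lambda>k. \<bar>(q - pp')$k\<bar>" \<tau>] by simp
    then have "dist q pp' < \<beta>" using norm_le_l1_cart[of "q - pp'"] taub by (simp add: dist_norm)
    then show ?thesis using beta(2) by auto
  qed
  have Q0N: "snd (Q0 k) \<le> N k" for k using W Q0(1) by blast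
  have pp'bx: "pp' \<in> bx N"
  proof -
    have "0 \<le> pp'$k \<and> pp'$k \<le> real (N k)" for k
    proof -
      consider "k = i" | "k \<noteq> i" "e$k = 0" | "k \<noteq> i" "e$k \<noteq> 0" by blast
      then show ?thesis
      proof cases
        case 1
        have "real (snd (Q0 k)) \<le> real (N k)" using Q0N by simp
        then show ?thesis using 1 zQ0[of k] by (simp add: pp'_def)
      next
        case 2
        have "real (snd (Q0 k)) \<le> real (N k)" using Q0N by simp
        then show ?thesis using 2 zdir[of k] by (simp add: pp'_def ccl_def)
      next
        case 3
        have u: "0 \<le> ts + s" "ts + s \<le> 1" using ts01 s0 s1 by auto
        have "pp'$k = (1 - (ts + s)) * x$k + (ts + s) * y$k"
          using 3 by (simp add: pp'_def q_def f_def e_def algebra_simps)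
        moreover have "0 \<le> x$k" "x$k \<le> real (N k)" "0 \<le> y$k" "y$k \<le> real (N k)" using xbx ybx by (auto simp: bx_def)
        ultimately show ?thesis using u
          by (auto intro!: convex_bound_le add_nonneg_nonneg mult_nonneg_nonneg)
      qed
    qed
    then show ?thesis by (simp add: bx_def)
  qed
  have Jsub: "J \<subseteq> {k. e$k \<noteq> 0}" by (simp add: J_def)
  have samek: "\<forall>k. k \<notin> J \<longrightarrow> pp'$k = pp$k" by (simp add: J_def pp_def pp'_def)
  have ppi: "pp$i = real c" using c by (simp add: pp_def)
  have gen: "\<forall>k. k \<noteq> i \<longrightarrow> 0 < \<bar>pp$k - z$k\<bar> \<and> \<bar>pp$k - z$k\<bar> < \<rho> \<and> 0 < \<bar>pp'$k - z$k\<bar> \<and> \<bar>pp'$k - z$k\<bar> < \<rho>"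
  proof (intro allI impI)
    fix k assume ki: "k \<noteq> i"
    have a1: "\<bar>pp$k - z$k\<bar> = \<tau>" using ki adir[of k] by (simp add: pp_def)
    have a2: "0 < \<bar>pp'$k - z$k\<bar> \<and> \<bar>pp'$k - z$k\<bar> < \<rho>"
    proof (cases "e$k = 0")
      case True then show ?thesis using ki adir[of k] tau0 taur by (simp add: pp'_def)
    next
      case False
      then have "\<bar>pp'$k - z$k\<bar> = s * \<bar>e$k\<bar>" using ki qk[of k] s0 by (simp add: pp'_def abs_mult)
      then show ?thesis using se[of k] s0 False by simp
    qed
    show "0 < \<bar>pp$k - z$k\<bar> \<and> \<bar>pp$k - z$k\<bar> < \<rho> \<and> 0 < \<bar>pp'$k - z$k\<bar> \<and> \<bar>pp'$k - z$k\<bar> < \<rho>"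
      using a1 a2 tau0 taur by simp
  qed
  have sg: "\<forall>k\<in>J. 0 < (pp'$k - pp$k) * e$k"
  proof
    fix k assume kJ: "k \<in> J"
    then have ek: "e$k \<noteq> 0" and ki: "k \<noteq> i" using ei by (auto simp: J_def)
    have "(pp'$k - pp$k) * e$k = s * (e$k * e$k) - \<tau> * dir k * e$k"
      using ki ek qk[of k] by (simp add: pp_def pp'_def algebra_simps)
    moreover have "\<tau> * dir k * e$k \<le> \<tau> * \<bar>e$k\<bar>"
      using tau0 by (auto simp: dir_def abs_if)
    moreover have "\<tau> * \<bar>e$k\<bar> < s * \<bar>e$k\<bar> * \<bar>e$k\<bar>"
      using taue[OF kJ] ek by (intro mult_strict_right_mono) auto
    moreover have "s * \<bar>e$k\<bar> * \<bar>e$k\<bar> = s * (e$k * e$k)" by (simp add: abs_mult_self_eq mult.assoc)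
    ultimately show "0 < (pp'$k - pp$k) * e$k" by linarith
  qed
  have zic: "z$i = real c" using c .
  from stair[OF c2 rho zic ei finJ, rule_format, OF Jsub ppS pp'S pp'bx samek[rule_format] ppi gen[rule_format] sg[rule_format]]
  obtain T Q j where TQ: "is_tjunction N M T" "ascell_data M T = (Q, i, j)" "z \<in> closure (ent_set T)"
    "Q \<in> M" "is_cell Q" "e$j \<noteq> 0" "0 < e$j \<longrightarrow> real (fst (Q j)) = z$j" "e$j < 0 \<longrightarrow> real (snd (Q j)) = z$j"
    by blast
  have od: "odir M T = i" "pdir M T = j" "ascell M T = Q" using TQ(2) by (simp_all add: odir_def pdir_def ascell_def)
  have zhull: "z \<in> convex hull {x, y}"
  proof -
    have "z = (1 - ts) *\<^sub>R x + ts *\<^sub>R y" by (simp add: z_def f_def e_def algebra_simps)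
    then have "z \<in> closed_segment x y" using ts01 by (auto simp: in_segment)
    then show ?thesis by (simp add: segment_convex_hull)
  qed
  have xyj: "x$j \<noteq> y$j" using TQ(6) by (simp add: e_def)
  have Qj: "fst (Q j) < snd (Q j)" using TQ(5) by (simp add: is_cell_def)
  have cs: "comp_set (Q j) = {real (fst (Q j))<..<real (snd (Q j))}" using Qj by (simp add: comp_set_def)
  have hull_j: "convex hull {x$j, y$j} = (if x$j \<le> y$j then {x$j..y$j} else {y$j..x$j})"
    using closed_segment_eq_real_ivl[of "x$j" "y$j"] segment_convex_hull[of "x$j" "y$j"] by simp
  have yz: "y$j - z$j = (1 - ts) * e$j" by (simp add: zk e_def algebra_simps)
  have "comp_set (Q j) \<inter> convex hull {x$j, y$j} \<noteq> {}"
  proof (cases "0 < e$j")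
    case True
    have fz: "real (fst (Q j)) = z$j" using TQ(7) True by blast
    have sz: "z$j + 1 \<le> real (snd (Q j))" using Qj fz by linarith
    have pos: "0 < (1 - ts) * e$j" using ts1 True by simp
    define v where "v = z$j + min (1/2) ((1 - ts) * e$j / 2)"
    have "z$j < v" "v < z$j + 1" using pos by (auto simp: v_def)
    moreover have "v < y$j" using yz pos by (auto simp: v_def)
    moreover have "x$j \<le> z$j" using zk[of j] ts01 True by simp
    moreover have "x$j \<le> y$j" using True by (simp add: e_def)
    ultimately have "v \<in> comp_set (Q j)" "v \<in> convex hull {x$j, y$j}" using cs fz sz hull_j by auto
    then show ?thesis by blast
  next
    case False
    then have neg: "e$j < 0" using TQ(6) by simp
    have sz: "real (snd (Q j)) = z$j" using TQ(8) neg by blast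
    have fz: "real (fst (Q j)) \<le> z$j - 1" using Qj sz by linarith
    have pos: "0 < (1 - ts) * (- e$j)" using ts1 neg by (simp add: mult_pos_neg)
    define v where "v = z$j - min (1/2) ((1 - ts) * (- e$j) / 2)"
    have "v < z$j" "z$j - 1 < v" using pos by (auto simp: v_def)
    moreover have "y$j < v" using yz pos by (auto simp: v_def)
    moreover have "z$j \<le> x$j" using zk[of j] ts01 neg by (simp add: mult_nonneg_nonpos)
    moreover have "\<not> x$j \<le> y$j" using neg by (simp add: e_def)
    ultimately have "v \<in> comp_set (Q j)" "v \<in> convex hull {x$j, y$j}" using cs fz sz hull_j by auto
    then show ?thesis by blast
  qed
  then show ?thesis using TQ(1,3) od zhull xyj by (auto simp: Let_def)
qed

end
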